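(* Let $A$ and $B$ be finite-dimensional quantum systems with Hilbert spaces $\mathcal H_A$, $\mathcal H_B$, let $\mathcal A$ be a quantum channel on $A$, $\mathcal B$ a quantum channel on $B$, and $\mathcal S$ a quantum channel on the direct-sum system $A\oplus B$ (Hilbert space $\mathcal H_A\oplus\mathcal H_B$). The following are equivalent: 1. $\mathcal S$ is a superposition of $\mathcal A$ and $\mathcal B$, i.e. (i) $\mathcal S$ satisfies the No Leakage Condition with respect to both sectors $A$ and $B$, and (ii) the restriction of $\mathcal S$ to sector $A$ is $\mathcal A$ and the restriction of $\mathcal S$ to sector $B$ is $\mathcal B$. 2. $\mathcal S$ has a Kraus representation $\{S_i\}_{i=1}^r$ with $S_i=A_i\oplus B_i$ for all $i$, where $\{A_i\}_{i=1}^r$ is some Kraus representation of $\mathcal A$ and $\{B_i\}_{i=1}^r$ is some Kraus representation of $\mathcal B$. 3. There exist a quantum system $E$ (the environment) with Hilbert space $\mathcal H_E$, a pure state $|\eta\rangle\in\mathcal H_E$, two Hamiltonians $H_{AE}$ and $H_{BE}$ with supports in the orthogonal subspaces $\mathcal H_A\otimes\mathcal H_E$ and $\mathcal H_B\otimes\mathcal H_E$ respectively, and a time $T$, such that, writing $\eta=|\eta\rangle\langle\eta|$: $\mathcal A(\rho)=\operatorname{Tr}_E[U_{AE}(\rho\otimes\eta)U_{AE}^\dagger]$ with $U_{AE}=\exp[-iH_{AE}T/\hbar]$; $\mathcal B(\rho)=\operatorname{Tr}_E[U_{BE}(\rho\otimes\eta)U_{BE}^\dagger]$ with $U_{BE}=\exp[-iH_{BE}T/\hbar]$;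 and $\mathcal S(\rho)=\operatorname{Tr}_E[U(\rho\otimes\eta)U^\dagger]$ with $U=\exp[-i(H_{AE}\oplus H_{BE})T/\hbar]$.
   Context: A quantum channel from system $X$ to system $Y$ is a linear completely positive trace-preserving map from density operators on $\mathcal H_X$ to density operators on $\mathcal H_Y$; it has Kraus representations $\mathcal C(\rho)=\sum_i C_i\rho C_i^\dagger$ with $\sum_i C_i^\dagger C_i=I$ (Kraus representations are non-unique and may contain zero operators). A sector of a system $S$ is a subspace $\mathcal H_A\subseteq\mathcal H_S$ with projector $P_A$; its states are density operators $\rho$ on $\mathcal H_S$ with $\operatorname{Tr}[\rho P_A]=1$. A channel $\widetilde{\mathcal C}$ on $S$ satisfies the No Leakage Condition with respect to sector $A$ if $\operatorname{Tr}[P_A\widetilde{\mathcal C}(\rho)]=1$ for every state $\rho$ of sector $A$. When this holds, for any Kraus representation $\{\widetilde C_i\}$ of $\widetilde{\mathcal C}$ the operators $C_i:=P_A\widetilde C_iP_A$ (viewed as operators on $\mathcal H_A$) are Kraus operators of a channel $\mathcal C$ on $A$, called the restriction of $\widetilde{\mathcal C}$ to sector $A$. In $A\oplus B$, $A$ and $B$ are orthogonal sectors. *)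

theory Defs
  imports Complex_Main "Jordan_Normal_Form.Matrix"
begin

(* Operators on finite-dimensional Hilbert spaces C^n are complex matrices;
   the Hilbert space of a system is identified with C^n, n = its dimension. *)

definition dag :: "complex mat \<Rightarrow> complex mat" where
  "dag M = mat (dim_col M) (dim_row M) (\<lambda>(i,j). cnj (M $$ (j,i)))"

definition mtrace :: "complex mat \<Rightarrow> complex" where
  "mtrace M = (\<Sum>i<dim_row M. M $$ (i,i))"

definition msum :: "nat \<Rightarrow> nat \<Rightarrow> complex mat list \<Rightarrow> complex mat" where
  "msum n m Ms = foldr (+) Ms (0\<^sub>m n m)"

definition hermitian :: "nat \<Rightarrow> complex mat \<Rightarrow> bool" where
  "hermitian n M \<longleftrightarrow> M \<in> carrier_mat n n \<and> dag M = M"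

definition density :: "nat \<Rightarrow> complex mat \<Rightarrow> bool" where
  "density n \<rho> \<longleftrightarrow> hermitian n \<rho> \<and>
     (\<forall>v \<in> carrier_vec n. 0 \<le> Re (\<Sum>i<n. cnj (v $ i) * (\<rho> *\<^sub>v v) $ i)) \<and>
     mtrace \<rho> = 1"

definition is_kraus_rep :: "nat \<Rightarrow> nat \<Rightarrow> (complex mat \<Rightarrow> complex mat) \<Rightarrow> complex mat list \<Rightarrow> bool" where
  "is_kraus_rep n m \<Phi> Ks \<longleftrightarrow>
     (\<forall>K \<in> set Ks. K \<in> carrier_mat m n) \<and>
     msum n n (map (\<lambda>K. dag K * K) Ks) = 1\<^sub>m n \<and>
     (\<forall>\<rho>. density n \<rho> \<longrightarrow> \<Phi> \<rho> = msum m m (map (\<lambda>K. K * \<rho> * dag K) Ks))"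

(* quantum channel from C^n to C^m (a CPTP map, given through its action on density operators) *)
definition is_channel :: "nat \<Rightarrow> nat \<Rightarrow> (complex mat \<Rightarrow> complex mat) \<Rightarrow> bool" where
  "is_channel n m \<Phi> \<longleftrightarrow> (\<exists>Ks. is_kraus_rep n m \<Phi> Ks)"

definition dsum :: "complex mat \<Rightarrow> complex mat \<Rightarrow> complex mat" where
  "dsum A B = four_block_mat A (0\<^sub>m (dim_row A) (dim_col B)) (0\<^sub>m (dim_row B) (dim_col A)) B"

definition projA :: "nat \<Rightarrow> nat \<Rightarrow> complex mat" where
  "projA a b = dsum (1\<^sub>m a) (0\<^sub>m b b)"

definition projB :: "nat \<Rightarrow> nat \<Rightarrow> complex mat" where
  "projB a b = dsum (0\<^sub>m a a) (1\<^sub>m b)"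

definition no_leakage :: "nat \<Rightarrow> complex mat \<Rightarrow> (complex mat \<Rightarrow> complex mat) \<Rightarrow> bool" where
  "no_leakage n P S \<longleftrightarrow>
     (\<forall>\<rho>. density n \<rho> \<and> mtrace (\<rho> * P) = 1 \<longrightarrow> mtrace (P * S \<rho>) = 1)"

(* P_A K P_A and P_B K P_B, viewed as operators on H_A = C^a, resp. H_B = C^b *)
definition blockA :: "nat \<Rightarrow> complex mat \<Rightarrow> complex mat" where
  "blockA a K = mat a a (\<lambda>(i,j). K $$ (i,j))"

definition blockB :: "nat \<Rightarrow> nat \<Rightarrow> complex mat \<Rightarrow> complex mat" where
  "blockB a b K = mat b b (\<lambda>(i,j). K $$ (a+i, a+j))"

definition restriction_A_is :: "nat \<Rightarrow> nat \<Rightarrow> (complex mat \<Rightarrow> complex mat) \<Rightarrow> (complex mat \<Rightarrow> complex mat) \<Rightarrow> bool" where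
  "restriction_A_is a b S CA \<longleftrightarrow>
     (\<forall>Ks. is_kraus_rep (a+b) (a+b) S Ks \<longrightarrow> is_kraus_rep a a CA (map (blockA a) Ks))"

definition restriction_B_is :: "nat \<Rightarrow> nat \<Rightarrow> (complex mat \<Rightarrow> complex mat) \<Rightarrow> (complex mat \<Rightarrow> complex mat) \<Rightarrow> bool" where
  "restriction_B_is a b S CB \<longleftrightarrow>
     (\<forall>Ks. is_kraus_rep (a+b) (a+b) S Ks \<longrightarrow> is_kraus_rep b b CB (map (blockB a b) Ks))"

definition superposition_of :: "nat \<Rightarrow> nat \<Rightarrow> (complex mat \<Rightarrow> complex mat) \<Rightarrow> (complex mat \<Rightarrow> complex mat) \<Rightarrow> (complex mat \<Rightarrow> complex mat) \<Rightarrow> bool" where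
  "superposition_of a b S CA CB \<longleftrightarrow>
     no_leakage (a+b) (projA a b) S \<and> no_leakage (a+b) (projB a b) S \<and>
     restriction_A_is a b S CA \<and> restriction_B_is a b S CB"

(* Kronecker (tensor) product; basis index of |i> \<otimes> |k> is i * dim + k *)
definition kron :: "complex mat \<Rightarrow> complex mat \<Rightarrow> complex mat" where
  "kron A B = mat (dim_row A * dim_row B) (dim_col A * dim_col B)
     (\<lambda>(i,j). A $$ (i div dim_row B, j div dim_col B) * B $$ (i mod dim_row B, j mod dim_col B))"

definition ptrace_E :: "nat \<Rightarrow> nat \<Rightarrow> complex mat \<Rightarrow> complex mat" where
  "ptrace_E s e M = mat s s (\<lambda>(i,j). \<Sum>k<e. M $$ (i*e+k, j*e+k))"

definition mexp :: "complex mat \<Rightarrow> complex mat" where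
  "mexp M = mat (dim_row M) (dim_row M) (\<lambda>(i,j). \<Sum>k. (M ^\<^sub>m k) $$ (i,j) / of_nat (fact k))"

definition unit_vec :: "nat \<Rightarrow> complex vec \<Rightarrow> bool" where
  "unit_vec e v \<longleftrightarrow> v \<in> carrier_vec e \<and> (\<Sum>i<e. (cmod (v $ i))\<^sup>2) = 1"

definition ket_bra :: "complex vec \<Rightarrow> complex mat" where
  "ket_bra v = mat (dim_vec v) (dim_vec v) (\<lambda>(i,j). v $ i * cnj (v $ j))"

definition hamiltonian_dilation :: "real \<Rightarrow> nat \<Rightarrow> nat \<Rightarrow> complex vec \<Rightarrow> complex mat \<Rightarrow> real \<Rightarrow> (complex mat \<Rightarrow> complex mat) \<Rightarrow> bool" where
  "hamiltonian_dilation hbar s e eta H T \<Phi> \<longleftrightarrow>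
     (let U = mexp ((- \<i> * of_real T / of_real hbar) \<cdot>\<^sub>m H) in
      \<forall>\<rho>. density s \<rho> \<longrightarrow> \<Phi> \<rho> = ptrace_E s e (U * kron \<rho> (ket_bra eta) * dag U))"

end

theory Submission
  imports Defs
begin

lemma mult_entry:
  assumes "A \<in> carrier_mat n m" "B \<in> carrier_mat m k" "i < n" "j < k"
  shows "(A * B) $$ (i,j) = (\<Sum>l<m. A $$ (i,l) * B $$ (l,j))"
  using assms by (auto simp: scalar_prod_def lessThan_atLeast0 intro!: sum.cong)

lemma mult_dims[simp]: "dim_row (A * B) = dim_row A" "dim_col (A * B) = dim_col B" by auto

lemma mult_index_sum[simp]: "i < dim_row A \<Longrightarrow> j < dim_col B \<Longrightarrow> dim_col A = dim_row B \<Longrightarrow> (A * B) $$ (i,j) = (\<Sum>l<dim_col A. A $$ (i,l) * B $$ (l,j))"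
  by (auto simp: scalar_prod_def lessThan_atLeast0 intro!: sum.cong)

lemma multv_index_sum[simp]: "i < dim_row A \<Longrightarrow> dim_vec v = dim_col A \<Longrightarrow> (A *\<^sub>v v) $ i = (\<Sum>l<dim_vec v. A $$ (i,l) * v $ l)"
  by (auto simp: scalar_prod_def lessThan_atLeast0 intro!: sum.cong)

declare index_mult_mat[simp del] index_mult_mat_vec[simp del]
declare mult_dims[simp] dim_mult_mat_vec[simp]

lemma mult_vec_entry:
  assumes "A \<in> carrier_mat n m" "v \<in> carrier_vec m" "i < n"
  shows "(A *\<^sub>v v) $ i = (\<Sum>l<m. A $$ (i,l) * v $ l)"
  using assms by (auto simp: scalar_prod_def lessThan_atLeast0 intro!: sum.cong)

lemma dag_carrier[simp]: "M \<in> carrier_mat n m \<Longrightarrow> dag M \<in> carrier_mat m n"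
  unfolding dag_def by auto

lemma dag_dims[simp]: "dim_row (dag M) = dim_col M" "dim_col (dag M) = dim_row M"
  unfolding dag_def by auto

lemma dag_index[simp]: "i < dim_col M \<Longrightarrow> j < dim_row M \<Longrightarrow> dag M $$ (i,j) = cnj (M $$ (j,i))"
  unfolding dag_def by auto

lemma sandwich_carrier[simp]: "K \<in> carrier_mat m n \<Longrightarrow> \<rho> \<in> carrier_mat n n \<Longrightarrow> K * \<rho> * dag K \<in> carrier_mat m m"
  by auto
lemma sandwich2_carrier[simp]: "K \<in> carrier_mat m n \<Longrightarrow> P \<in> carrier_mat m m \<Longrightarrow> dag K * P * K \<in> carrier_mat n n"
  by auto
lemma dagK_K_carrier[simp]: "K \<in> carrier_mat m n \<Longrightarrow> dag K * K \<in> carrier_mat n n"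
  by auto

lemma sandwich_sq[simp]: "K \<in> carrier_mat n n \<Longrightarrow> \<rho> \<in> carrier_mat n n \<Longrightarrow> K * \<rho> * dag K \<in> carrier_mat n n"
  by auto
lemma sandwich2_sq[simp]: "K \<in> carrier_mat n n \<Longrightarrow> P \<in> carrier_mat n n \<Longrightarrow> dag K * P * K \<in> carrier_mat n n"
  by auto
lemma dagK_K_sq[simp]: "K \<in> carrier_mat n n \<Longrightarrow> dag K * K \<in> carrier_mat n n"
  by auto

lemma dag_dag[simp]: "dag (dag M) = M"
  by (rule eq_matI) auto

lemma dag_mult: assumes "A \<in> carrier_mat n m" "B \<in> carrier_mat m k"
  shows "dag (A * B) = dag B * dag A"
proof (rule eq_matI)
  fix i j assume "i < dim_row (dag B * dag A)" "j < dim_col (dag B * dag A)"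
  with assms have ij: "i < k" "j < n" by auto
  have "dag (A * B) $$ (i, j) = cnj ((A*B) $$ (j,i))" using assms ij by simp
  also have "\<dots> = (\<Sum>l<m. cnj (A $$ (j,l)) * cnj (B $$ (l,i)))"
    by (subst mult_entry[OF assms(1,2) ij(2,1)]) simp
  also have "\<dots> = (dag B * dag A) $$ (i, j)"
    by (subst mult_entry[of _ k m _ n]) (use assms ij in \<open>auto simp: mult.commute\<close>)
  finally show "dag (A * B) $$ (i, j) = (dag B * dag A) $$ (i, j)" .
qed (use assms in auto)

lemma dag_add: assumes "A \<in> carrier_mat n m" "B \<in> carrier_mat n m"
  shows "dag (A + B) = dag A + dag B"
  by (rule eq_matI) (use assms in auto)

lemma dag_minus: assumes "A \<in> carrier_mat n m" "B \<in> carrier_mat n m"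
  shows "dag (A - B) = dag A - dag B"
  by (rule eq_matI) (use assms in auto)

lemma dag_smult_real: "dag (complex_of_real r \<cdot>\<^sub>m A) = complex_of_real r \<cdot>\<^sub>m dag A"
  by (rule eq_matI) auto

lemma dag_one[simp]: "dag (1\<^sub>m n) = 1\<^sub>m n"
  by (rule eq_matI) auto

lemma dag_zero[simp]: "dag (0\<^sub>m n m) = 0\<^sub>m m n"
  by (rule eq_matI) auto

lemma msum_Cons[simp]: "msum n m (M # Ms) = M + msum n m Ms"
  unfolding msum_def by simp

lemma msum_Nil[simp]: "msum n m [] = 0\<^sub>m n m"
  unfolding msum_def by simp

lemma msum_carrier: "(\<And>M. M \<in> set Ms \<Longrightarrow> M \<in> carrier_mat n m) \<Longrightarrow> msum n m Ms \<in> carrier_mat n m"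
  by (induction Ms) auto

lemma msum_index: "(\<And>M. M \<in> set Ms \<Longrightarrow> M \<in> carrier_mat n m) \<Longrightarrow> i < n \<Longrightarrow> j < m \<Longrightarrow>
   msum n m Ms $$ (i,j) = (\<Sum>M\<leftarrow>Ms. M $$ (i,j))"
proof (induction Ms)
  case (Cons M Ms)
  have "msum n m Ms \<in> carrier_mat n m" using Cons by (intro msum_carrier) auto
  with Cons show ?case by auto
qed auto

lemma msum_map_carrier: "(\<And>x. x \<in> set xs \<Longrightarrow> f x \<in> carrier_mat n m) \<Longrightarrow> msum n m (map f xs) \<in> carrier_mat n m"
  by (rule msum_carrier) auto

lemma msum_map_index: "(\<And>x. x \<in> set xs \<Longrightarrow> f x \<in> carrier_mat n m) \<Longrightarrow> i < n \<Longrightarrow> j < m \<Longrightarrow>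
   msum n m (map f xs) $$ (i,j) = (\<Sum>x\<leftarrow>xs. f x $$ (i,j))"
  by (subst msum_index) (auto simp: comp_def)

lemma dsum_carrier[simp]: "A \<in> carrier_mat n1 m1 \<Longrightarrow> B \<in> carrier_mat n2 m2 \<Longrightarrow> dsum A B \<in> carrier_mat (n1+n2) (m1+m2)"
  unfolding dsum_def by auto

lemma dsum_dims[simp]: "dim_row (dsum A B) = dim_row A + dim_row B" "dim_col (dsum A B) = dim_col A + dim_col B"
  unfolding dsum_def by auto

lemma dsum_index:
  assumes "A \<in> carrier_mat n1 m1" "B \<in> carrier_mat n2 m2" "i < n1 + n2" "j < m1 + m2"
  shows "dsum A B $$ (i,j) = (if i < n1 then if j < m1 then A $$ (i,j) else 0
     else if j < m1 then 0 else B $$ (i - n1, j - m1))"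
  using assms unfolding dsum_def by auto

lemma dsum_mult:
  assumes "A1 \<in> carrier_mat n1 k1" "A2 \<in> carrier_mat k1 m1" "B1 \<in> carrier_mat n2 k2" "B2 \<in> carrier_mat k2 m2"
  shows "dsum A1 B1 * dsum A2 B2 = dsum (A1 * A2) (B1 * B2)"
  using assms unfolding dsum_def
  by (subst mult_four_block_mat[of A1 n1 k1 _ k2 _ n2 _ A2 m1 _ m2]) (auto simp del: mult_dims simp: index_mult_mat)

lemma dag_dsum: "dag (dsum A B) = dsum (dag A) (dag B)"
proof (rule eq_matI)
  fix i j assume "i < dim_row (dsum (dag A) (dag B))" "j < dim_col (dsum (dag A) (dag B))"
  then show "dag (dsum A B) $$ (i, j) = dsum (dag A) (dag B) $$ (i, j)"
    unfolding dsum_def by auto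
qed auto

lemma dsum_add:
  assumes "A1 \<in> carrier_mat n1 m1" "A2 \<in> carrier_mat n1 m1" "B1 \<in> carrier_mat n2 m2" "B2 \<in> carrier_mat n2 m2"
  shows "dsum A1 B1 + dsum A2 B2 = dsum (A1 + A2) (B1 + B2)"
  by (rule eq_matI) (use assms in \<open>auto simp: dsum_index[of _ n1 m1 _ n2 m2]\<close>)

lemma dsum_minus:
  assumes "A1 \<in> carrier_mat n1 m1" "A2 \<in> carrier_mat n1 m1" "B1 \<in> carrier_mat n2 m2" "B2 \<in> carrier_mat n2 m2"
  shows "dsum A1 B1 - dsum A2 B2 = dsum (A1 - A2) (B1 - B2)"
proof -
  have c: "A1 - A2 \<in> carrier_mat n1 m1" "B1 - B2 \<in> carrier_mat n2 m2" using assms by auto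
  show ?thesis
  by (rule eq_matI) (use assms c in \<open>auto simp: dsum_index[of _ n1 m1 _ n2 m2]\<close>)
qed

lemma dsum_smult:
  shows "c \<cdot>\<^sub>m dsum A B = dsum (c \<cdot>\<^sub>m A) (c \<cdot>\<^sub>m B)"
  by (rule eq_matI) (auto simp: dsum_def)

lemma dsum_zero: "dsum (0\<^sub>m n1 m1) (0\<^sub>m n2 m2) = 0\<^sub>m (n1+n2) (m1+m2)"
  by (rule eq_matI) (auto simp: dsum_def)

lemma dsum_one: "dsum (1\<^sub>m n1) (1\<^sub>m n2) = 1\<^sub>m (n1+n2)"
  by (rule eq_matI) (auto simp: dsum_def)

lemma blockA_dsum: "A \<in> carrier_mat a a \<Longrightarrow> blockA a (dsum A B) = A"
  by (rule eq_matI) (auto simp: blockA_def dsum_def)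

lemma blockB_dsum: "A \<in> carrier_mat a a \<Longrightarrow> B \<in> carrier_mat b b \<Longrightarrow> blockB a b (dsum A B) = B"
  by (rule eq_matI) (auto simp: blockB_def dsum_def)

lemma blockA_carrier[simp]: "blockA a K \<in> carrier_mat a a" unfolding blockA_def by auto
lemma blockB_carrier[simp]: "blockB a b K \<in> carrier_mat b b" unfolding blockB_def by auto

lemma msum_dsum:
  assumes "\<And>x. x \<in> set xs \<Longrightarrow> f x \<in> carrier_mat n1 m1" "\<And>x. x \<in> set xs \<Longrightarrow> g x \<in> carrier_mat n2 m2"
  shows "msum (n1+n2) (m1+m2) (map (\<lambda>x. dsum (f x) (g x)) xs) = dsum (msum n1 m1 (map f xs)) (msum n2 m2 (map g xs))"
  using assms
proof (induction xs)
  case Nil then show ?case by (simp add: dsum_zero)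
next
  case (Cons x xs)
  then show ?case
    by (simp, subst dsum_add[of _ n1 m1 _ _ n2 m2]) (auto intro: msum_map_carrier)
qed

lemma msum_zeros: "msum n m (map (\<lambda>x. 0\<^sub>m n m) xs) = 0\<^sub>m n m"
  by (induction xs) auto

lemma mtrace_index: "M \<in> carrier_mat n n \<Longrightarrow> mtrace M = (\<Sum>i<n. M $$ (i,i))"
  unfolding mtrace_def by auto

lemma mtrace_add: "A \<in> carrier_mat n n \<Longrightarrow> B \<in> carrier_mat n n \<Longrightarrow> mtrace (A + B) = mtrace A + mtrace B"
  by (simp add: mtrace_def sum.distrib)

lemma mult_cnj_sq: "z * cnj z = complex_of_real ((cmod z)\<^sup>2)"
  by (rule complex_norm_square[symmetric])

lemma mtrace_comm: assumes "A \<in> carrier_mat n m" "B \<in> carrier_mat m n"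
  shows "mtrace (A * B) = mtrace (B * A)"
proof -
  have "mtrace (A * B) = (\<Sum>i<n. \<Sum>l<m. A $$ (i,l) * B $$ (l,i))"
    using assms by (simp add: mtrace_index[of _ n] mult_entry[OF assms])
  also have "\<dots> = (\<Sum>l<m. \<Sum>i<n. B $$ (l,i) * A $$ (i,l))"
    by (subst sum.swap) (simp add: mult.commute)
  also have "\<dots> = mtrace (B * A)"
    using assms by (simp add: mtrace_index[of _ m] mult_entry[OF assms(2,1)])
  finally show ?thesis .
qed

lemma kraus_trace:
  assumes P: "P \<in> carrier_mat n n" and r: "\<rho> \<in> carrier_mat n n"
    and Ks: "\<And>K. K \<in> set Ks \<Longrightarrow> K \<in> carrier_mat n n"
  shows "mtrace (P * msum n n (map (\<lambda>K. K * \<rho> * dag K) Ks)) =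
         mtrace (msum n n (map (\<lambda>K. dag K * P * K) Ks) * \<rho>)"
  using Ks
proof (induction Ks)
  case Nil
  then show ?case using P r by (simp add: mtrace_index)
next
  case (Cons K Ks)
  have K: "K \<in> carrier_mat n n" using Cons by auto
  have S1: "msum n n (map (\<lambda>K. K * \<rho> * dag K) Ks) \<in> carrier_mat n n"
    using Cons r by (intro msum_map_carrier) auto
  have S2: "msum n n (map (\<lambda>K. dag K * P * K) Ks) \<in> carrier_mat n n"
    using Cons P by (intro msum_map_carrier) auto
  have e1: "mtrace (P * (K * \<rho> * dag K)) = mtrace ((dag K * P * K) * \<rho>)"
  proof -
    have "P * (K * \<rho> * dag K) = (P * K * \<rho>) * dag K"
      using P K r by (simp add: assoc_mult_mat[of _ n n _ n _ n])
    then have "mtrace (P * (K * \<rho> * dag K)) = mtrace (dag K * (P * K * \<rho>))"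
      using P K r by (simp add: mtrace_comm[of _ n n])
    also have "dag K * (P * K * \<rho>) = (dag K * P * K) * \<rho>"
      using P K r by (simp add: assoc_mult_mat[of _ n n _ n _ n])
    finally show ?thesis .
  qed
  have "mtrace (P * msum n n (map (\<lambda>K. K * \<rho> * dag K) (K # Ks)))
      = mtrace (P * (K * \<rho> * dag K)) + mtrace (P * msum n n (map (\<lambda>K. K * \<rho> * dag K) Ks))"
    using P K r S1 by (simp add: mult_add_distrib_mat[OF P _ S1] mtrace_add[of _ n])
  also have "\<dots> = mtrace ((dag K * P * K) * \<rho>) + mtrace (msum n n (map (\<lambda>K. dag K * P * K) Ks) * \<rho>)"
    using e1 Cons by simp
  also have "\<dots> = mtrace (msum n n (map (\<lambda>K. dag K * P * K) (K # Ks)) * \<rho>)"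
  proof -
    have c1: "dag K * P * K * \<rho> \<in> carrier_mat n n" "msum n n (map (\<lambda>K. dag K * P * K) Ks) * \<rho> \<in> carrier_mat n n"
      using P K r S2 by auto
    show ?thesis
    using P K r S2 by (simp add: add_mult_distrib_mat[OF _ S2 r] mtrace_add[OF c1])
  qed
  finally show ?case .
qed

lemma kraus_trace_pres:
  assumes "is_kraus_rep n n \<Phi> Ks" "density n \<rho>"
  shows "mtrace (\<Phi> \<rho>) = 1"
proof -
  have Ks: "\<And>K. K \<in> set Ks \<Longrightarrow> K \<in> carrier_mat n n" and sum: "msum n n (map (\<lambda>K. dag K * K) Ks) = 1\<^sub>m n"
    and act: "\<Phi> \<rho> = msum n n (map (\<lambda>K. K * \<rho> * dag K) Ks)"
    using assms unfolding is_kraus_rep_def by auto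
  have r: "\<rho> \<in> carrier_mat n n" "mtrace \<rho> = 1" using assms(2) unfolding density_def hermitian_def by auto
  have S1: "msum n n (map (\<lambda>K. K * \<rho> * dag K) Ks) \<in> carrier_mat n n"
    using Ks r by (intro msum_map_carrier) auto
  have meq: "map (\<lambda>K. dag K * 1\<^sub>m n * K) Ks = map (\<lambda>K. dag K * K) Ks"
  proof (intro map_cong refl)
    fix K assume "K \<in> set Ks" then have "K \<in> carrier_mat n n" using Ks by auto
    then show "dag K * 1\<^sub>m n * K = dag K * K" by simp
  qed
  have "msum n n (map (\<lambda>K. dag K * 1\<^sub>m n * K) Ks) = 1\<^sub>m n" by (subst meq) (rule sum)
  then have "mtrace (1\<^sub>m n * \<Phi> \<rho>) = mtrace \<rho>"
    using kraus_trace[of "1\<^sub>m n" n \<rho> Ks] Ks r act by simp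
  then show ?thesis using S1 act r by simp
qed

definition bst :: "nat \<Rightarrow> nat \<Rightarrow> complex mat" where
  "bst n j = mat n n (\<lambda>(p,q). if p = j \<and> q = j then 1 else 0)"

lemma bst_carrier[simp]: "bst n j \<in> carrier_mat n n" unfolding bst_def by auto
lemma bst_dims[simp]: "dim_row (bst n j) = n" "dim_col (bst n j) = n" unfolding bst_def by auto
lemma bst_index: "p < n \<Longrightarrow> q < n \<Longrightarrow> bst n j $$ (p,q) = (if p = j \<and> q = j then 1 else 0)"
  unfolding bst_def by auto
lemma bst_multv: assumes "v \<in> carrier_vec n" "i < n" "j < n" shows "(bst n j *\<^sub>v v) $ i = (if i = j then v $ j else 0)"
proof -
  have "(bst n j *\<^sub>v v) $ i = (\<Sum>l<n. bst n j $$ (i,l) * v $ l)"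
    using assms by (simp add: mult_vec_entry[of _ n n])
  also have "\<dots> = (\<Sum>l<n. (if i = j \<and> l = j then 1 else 0) * v $ l)"
    using assms by (intro sum.cong) (auto simp: bst_index)
  also have "\<dots> = (\<Sum>l<n. if i = j \<and> l = j then v $ l else 0)" by (intro sum.cong) auto
  also have "\<dots> = (if i = j then v $ j else 0)" using assms by (auto simp: sum.delta)
  finally show ?thesis .
qed

lemma bst_sandwich:
  assumes "K \<in> carrier_mat n n" "j < n"
  shows "K * bst n j * dag K = mat n n (\<lambda>(m,m'). K $$ (m,j) * cnj (K $$ (m',j)))"
proof -
  have 1: "K * bst n j = mat n n (\<lambda>(m,q). if q = j then K $$ (m,j) else 0)"
  proof (rule eq_matI)
    fix i q assume iq: "i < dim_row (mat n n (\<lambda>(m,q). if q = j then K $$ (m,j) else 0))"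
       "q < dim_col (mat n n (\<lambda>(m,q). if q = j then K $$ (m,j) else 0))"
    then have iq': "i < n" "q < n" by auto
    have "(K * bst n j) $$ (i,q) = (\<Sum>l<n. K $$ (i,l) * bst n j $$ (l,q))"
      using assms iq' by simp
    also have "\<dots> = (\<Sum>l<n. if l = j \<and> q = j then K $$ (i,j) else 0)"
      using iq' by (intro sum.cong) (auto simp: bst_index)
    also have "\<dots> = (if q = j then K $$ (i,j) else 0)" using assms by (auto simp: sum.delta)
    finally show "(K * bst n j) $$ (i,q) = mat n n (\<lambda>(m,q). if q = j then K $$ (m,j) else 0) $$ (i,q)"
      using iq' by simp
  qed (use assms in auto)
  show ?thesis unfolding 1
  proof (rule eq_matI)
    fix i q assume iq: "i < dim_row (mat n n (\<lambda>(m,m'). K $$ (m,j) * cnj (K $$ (m',j))))"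
       "q < dim_col (mat n n (\<lambda>(m,m'). K $$ (m,j) * cnj (K $$ (m',j))))"
    then show "(mat n n (\<lambda>(m,q). if q = j then K $$ (m,j) else 0) * dag K) $$ (i,q) = mat n n (\<lambda>(m,m'). K $$ (m,j) * cnj (K $$ (m',j))) $$ (i,q)"
    proof -
      have iq': "i < n" "q < n" using iq by auto
      have "(mat n n (\<lambda>(m,q). if q = j then K $$ (m,j) else 0) * dag K) $$ (i,q)
         = (\<Sum>l<n. (if l = j then K $$ (i,j) else 0) * cnj (K $$ (q,l)))"
        using assms iq' by (auto intro!: sum.cong)
      also have "\<dots> = (\<Sum>l<n. if l = j then K $$ (i,j) * cnj (K $$ (q,j)) else 0)"
        by (intro sum.cong) auto
      also have "\<dots> = K $$ (i,j) * cnj (K $$ (q,j))" using assms by (simp add: sum.delta)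
      finally show ?thesis using iq' by simp
    qed
  qed (use assms in auto)
qed

lemma bst_density: assumes "j < n" shows "density n (bst n j)"
proof -
  have h: "hermitian n (bst n j)" unfolding hermitian_def by (auto intro!: eq_matI simp: bst_def)
  have t: "mtrace (bst n j) = 1" using assms by (simp add: mtrace_def bst_def)
  have p: "0 \<le> Re (\<Sum>i<n. cnj (v $ i) * (bst n j *\<^sub>v v) $ i)" if v: "v \<in> carrier_vec n" for v
  proof -
    have "(\<Sum>i<n. cnj (v $ i) * (bst n j *\<^sub>v v) $ i) = (\<Sum>i<n. if i = j then cnj (v $ j) * v $ j else 0)"
      using v assms by (intro sum.cong) (auto simp del: multv_index_sum simp: bst_multv)
    also have "\<dots> = cnj (v $ j) * v $ j" using assms by simp
    finally show ?thesis by simp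
  qed
  show ?thesis using h t p unfolding density_def by auto
qed

lemma kraus_diag_bst:
  assumes "\<And>K. K \<in> set Ks \<Longrightarrow> K \<in> carrier_mat n n" "j < n" "m < n"
  shows "msum n n (map (\<lambda>K. K * bst n j * dag K) Ks) $$ (m,m) = of_real (\<Sum>K\<leftarrow>Ks. (cmod (K $$ (m,j)))\<^sup>2)"
proof -
  have "msum n n (map (\<lambda>K. K * bst n j * dag K) Ks) $$ (m,m) = (\<Sum>K\<leftarrow>Ks. (K * bst n j * dag K) $$ (m,m))"
    using assms by (intro msum_map_index) auto
  also have "\<dots> = (\<Sum>K\<leftarrow>Ks. of_real ((cmod (K $$ (m,j)))\<^sup>2))"
    using assms by (intro arg_cong[where f=sum_list] map_cong) (auto simp: bst_sandwich mult_cnj_sq simp del: of_real_power)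
  also have "\<dots> = of_real (\<Sum>K\<leftarrow>Ks. (cmod (K $$ (m,j)))\<^sup>2)"
    by (induction Ks) auto
  finally show ?thesis .
qed

lemma kraus_zero_col:
  assumes Ks: "\<And>K. K \<in> set Ks \<Longrightarrow> K \<in> carrier_mat n n" and j: "j < n" and M: "M \<subseteq> {..<n}"
    and z: "(\<Sum>m\<in>M. msum n n (map (\<lambda>K. K * bst n j * dag K) Ks) $$ (m,m)) = 0"
    and K: "K \<in> set Ks" and m: "m \<in> M"
  shows "K $$ (m,j) = 0"
proof -
  have fin: "finite M" using M finite_subset by blast
  have "(\<Sum>m\<in>M. msum n n (map (\<lambda>K. K * bst n j * dag K) Ks) $$ (m,m)) = of_real (\<Sum>m\<in>M. (\<Sum>K\<leftarrow>Ks. (cmod (K $$ (m,j)))\<^sup>2))"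
    using M by (auto simp: kraus_diag_bst[OF Ks j] intro!: sum.cong)
  with z have z2: "(\<Sum>m\<in>M. (\<Sum>K\<leftarrow>Ks. (cmod (K $$ (m,j)))\<^sup>2)) = 0" by (simp only: of_real_eq_0_iff)
  have nn: "\<And>m. 0 \<le> (\<Sum>K\<leftarrow>Ks. (cmod (K $$ (m,j)))\<^sup>2)" by (intro sum_list_nonneg) auto
  have "(\<Sum>K\<leftarrow>Ks. (cmod (K $$ (m,j)))\<^sup>2) = 0"
    using z2 sum_nonneg_eq_0_iff[OF fin, of "\<lambda>m. (\<Sum>K\<leftarrow>Ks. (cmod (K $$ (m,j)))\<^sup>2)"] nn m by auto
  then have "(cmod (K $$ (m,j)))\<^sup>2 = 0"
    using K by (subst (asm) sum_list_nonneg_eq_0_iff) auto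
  then show ?thesis by simp
qed

lemma sum_split_add: "(\<Sum>i<a+(b::nat). f i) = (\<Sum>i<a. f i) + (\<Sum>i<b. f (a+i))"
  by (induction b) (auto simp: add.assoc)

lemma kraus_carrier: "is_kraus_rep n m \<Phi> Ks \<Longrightarrow> density n \<rho> \<Longrightarrow> \<Phi> \<rho> \<in> carrier_mat m m"
  unfolding is_kraus_rep_def density_def hermitian_def
  by (auto intro!: msum_map_carrier)

lemma density_carrier: "density n \<rho> \<Longrightarrow> \<rho> \<in> carrier_mat n n"
  unfolding density_def hermitian_def by auto

lemma density_dsumA:
  assumes d: "density a \<rho>" shows "density (a+b) (dsum \<rho> (0\<^sub>m b b))"
proof -
  have r: "\<rho> \<in> carrier_mat a a" "dag \<rho> = \<rho>" "mtrace \<rho> = 1"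
    and psd: "\<And>v. v \<in> carrier_vec a \<Longrightarrow> 0 \<le> Re (\<Sum>i<a. cnj (v $ i) * (\<rho> *\<^sub>v v) $ i)"
    using d unfolding density_def hermitian_def by auto
  let ?M = "dsum \<rho> (0\<^sub>m b b)"
  have Mc: "?M \<in> carrier_mat (a+b) (a+b)" using r by auto
  have h: "hermitian (a+b) ?M" unfolding hermitian_def using Mc r by (simp add: dag_dsum)
  have t: "mtrace ?M = 1"
    using r by (simp add: mtrace_def sum_split_add dsum_index[of _ a a _ b b])
  have p: "0 \<le> Re (\<Sum>i<a+b. cnj (v $ i) * (?M *\<^sub>v v) $ i)" if v: "v \<in> carrier_vec (a+b)" for v
  proof -
    define w where "w = vec a (\<lambda>i. v $ i)"
    have w: "w \<in> carrier_vec a" unfolding w_def by auto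
    have Mv1: "(?M *\<^sub>v v) $ i = (\<rho> *\<^sub>v w) $ i" if i: "i < a" for i
    proof -
      have "(?M *\<^sub>v v) $ i = (\<Sum>l<a+b. ?M $$ (i,l) * v $ l)" using Mc v i by (simp add: mult_vec_entry[of _ "a+b" "a+b"])
      also have "\<dots> = (\<Sum>l<a. \<rho> $$ (i,l) * v $ l)"
        using r i by (simp add: sum_split_add dsum_index[of _ a a _ b b])
      also have "\<dots> = (\<rho> *\<^sub>v w) $ i" using r w i by (simp add: mult_vec_entry[of _ a a] w_def)
      finally show ?thesis .
    qed
    have Mv2: "(?M *\<^sub>v v) $ (a+i) = 0" if i: "i < b" for i
    proof -
      have "(?M *\<^sub>v v) $ (a+i) = (\<Sum>l<a+b. ?M $$ (a+i,l) * v $ l)" using Mc v i by (simp add: mult_vec_entry[of _ "a+b" "a+b"])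
      also have "\<dots> = 0"
        using r i by (simp add: sum_split_add dsum_index[of _ a a _ b b])
      finally show ?thesis .
    qed
    have "(\<Sum>i<a+b. cnj (v $ i) * (?M *\<^sub>v v) $ i) = (\<Sum>i<a. cnj (w $ i) * (\<rho> *\<^sub>v w) $ i)"
      by (simp add: sum_split_add Mv1 Mv2 w_def)
    then show ?thesis using psd[OF w] by simp
  qed
  show ?thesis unfolding density_def using h t p by auto
qed

lemma density_dsumB:
  assumes d: "density b \<rho>" shows "density (a+b) (dsum (0\<^sub>m a a) \<rho>)"
proof -
  have r: "\<rho> \<in> carrier_mat b b" "dag \<rho> = \<rho>" "mtrace \<rho> = 1"
    and psd: "\<And>v. v \<in> carrier_vec b \<Longrightarrow> 0 \<le> Re (\<Sum>i<b. cnj (v $ i) * (\<rho> *\<^sub>v v) $ i)"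
    using d unfolding density_def hermitian_def by auto
  let ?M = "dsum (0\<^sub>m a a) \<rho>"
  have Mc: "?M \<in> carrier_mat (a+b) (a+b)" using r by auto
  have h: "hermitian (a+b) ?M" unfolding hermitian_def using Mc r by (simp add: dag_dsum)
  have t: "mtrace ?M = 1"
    using r by (simp add: mtrace_def sum_split_add dsum_index[of _ a a _ b b])
  have p: "0 \<le> Re (\<Sum>i<a+b. cnj (v $ i) * (?M *\<^sub>v v) $ i)" if v: "v \<in> carrier_vec (a+b)" for v
  proof -
    define w where "w = vec b (\<lambda>i. v $ (a+i))"
    have w: "w \<in> carrier_vec b" unfolding w_def by auto
    have Mv1: "(?M *\<^sub>v v) $ (a+i) = (\<rho> *\<^sub>v w) $ i" if i: "i < b" for i
    proof -
      have "(?M *\<^sub>v v) $ (a+i) = (\<Sum>l<a+b. ?M $$ (a+i,l) * v $ l)" using Mc v i by (simp add: mult_vec_entry[of _ "a+b" "a+b"])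
      also have "\<dots> = (\<Sum>l<b. \<rho> $$ (i,l) * v $ (a+l))"
        using r i by (simp add: sum_split_add dsum_index[of _ a a _ b b])
      also have "\<dots> = (\<rho> *\<^sub>v w) $ i" using r w i by (simp add: mult_vec_entry[of _ b b] w_def)
      finally show ?thesis .
    qed
    have Mv2: "(?M *\<^sub>v v) $ i = 0" if i: "i < a" for i
    proof -
      have "(?M *\<^sub>v v) $ i = (\<Sum>l<a+b. ?M $$ (i,l) * v $ l)" using Mc v i by (simp add: mult_vec_entry[of _ "a+b" "a+b"])
      also have "\<dots> = 0"
        using r i by (simp add: sum_split_add dsum_index[of _ a a _ b b])
      finally show ?thesis .
    qed
    have "(\<Sum>i<a+b. cnj (v $ i) * (?M *\<^sub>v v) $ i) = (\<Sum>i<b. cnj (w $ i) * (\<rho> *\<^sub>v w) $ i)"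
      by (simp add: sum_split_add Mv1 Mv2 w_def)
    then show ?thesis using psd[OF w] by simp
  qed
  show ?thesis unfolding density_def using h t p by auto
qed

lemma bst_dsumA: "j < a \<Longrightarrow> bst (a+b) j = dsum (bst a j) (0\<^sub>m b b)"
  by (rule eq_matI) (auto simp: dsum_index[of _ a a _ b b] bst_index)

lemma bst_dsumB: "a \<le> j \<Longrightarrow> bst (a+b) j = dsum (0\<^sub>m a a) (bst b (j-a))"
  by (rule eq_matI) (auto simp: dsum_index[of _ a a _ b b] bst_index)

lemma sandwich_dsum:
  assumes "A \<in> carrier_mat a a" "B \<in> carrier_mat b b" "X \<in> carrier_mat a a" "Y \<in> carrier_mat b b"
  shows "dsum A B * dsum X Y * dag (dsum A B) = dsum (A * X * dag A) (B * Y * dag B)"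
  using assms by (simp add: dag_dsum dsum_mult[of _ a a _ a _ b b _ b])

lemma sandwich2_dsum:
  assumes "A \<in> carrier_mat a a" "B \<in> carrier_mat b b" "X \<in> carrier_mat a a" "Y \<in> carrier_mat b b"
  shows "dag (dsum A B) * dsum X Y * dsum A B = dsum (dag A * X * A) (dag B * Y * B)"
proof -
  have "dag A * X \<in> carrier_mat a a" "dag B * Y \<in> carrier_mat b b" using assms by auto
  then show ?thesis
  using assms by (simp add: dag_dsum dsum_mult[of _ a a _ a _ b b _ b])
qed

definition bdiag :: "nat \<Rightarrow> nat \<Rightarrow> complex mat \<Rightarrow> bool" where
  "bdiag a b K \<longleftrightarrow> (\<forall>i<a+b. \<forall>j<a+b. (i < a) \<noteq> (j < a) \<longrightarrow> K $$ (i,j) = 0)"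

lemma bdiag_dsum: assumes "K \<in> carrier_mat (a+b) (a+b)" "bdiag a b K"
  shows "K = dsum (blockA a K) (blockB a b K)"
  by (rule eq_matI) (use assms in \<open>auto simp: dsum_index[of _ a a _ b b] bdiag_def blockA_def blockB_def\<close>)

definition BP :: "nat \<Rightarrow> nat \<Rightarrow> (complex mat \<Rightarrow> complex mat) \<Rightarrow> (complex mat \<Rightarrow> complex mat) \<Rightarrow> (complex mat \<Rightarrow> complex mat) \<Rightarrow> bool" where
  "BP a b CS CA CB \<longleftrightarrow> (\<forall>\<rho>. density a \<rho> \<longrightarrow> CS (dsum \<rho> (0\<^sub>m b b)) = dsum (CA \<rho>) (0\<^sub>m b b)) \<and>
                        (\<forall>\<rho>. density b \<rho> \<longrightarrow> CS (dsum (0\<^sub>m a a) \<rho>) = dsum (0\<^sub>m a a) (CB \<rho>))"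

lemma BP_bdiag:
  assumes BP: "BP a b CS CA CB" and KA: "is_kraus_rep a a CA As" and KB: "is_kraus_rep b b CB Bs"
    and KS: "is_kraus_rep (a+b) (a+b) CS Ks" and K: "K \<in> set Ks"
  shows "bdiag a b K"
  unfolding bdiag_def
proof (intro allI impI)
  fix i j assume i: "i < a+b" and j: "j < a+b" and ij: "(i < a) \<noteq> (j < a)"
  have Ks: "\<And>K. K \<in> set Ks \<Longrightarrow> K \<in> carrier_mat (a+b) (a+b)"
    and act: "\<And>\<rho>. density (a+b) \<rho> \<Longrightarrow> CS \<rho> = msum (a+b) (a+b) (map (\<lambda>K. K * \<rho> * dag K) Ks)"
    using KS unfolding is_kraus_rep_def by auto
  show "K $$ (i,j) = 0"
  proof (cases "j < a")
    case True
    then have ia: "a \<le> i" using ij by auto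
    have d: "density a (bst a j)" using True by (rule bst_density)
    have c: "CA (bst a j) \<in> carrier_mat a a" using kraus_carrier[OF KA d] .
    have "CS (bst (a+b) j) = dsum (CA (bst a j)) (0\<^sub>m b b)"
      using BP d True unfolding BP_def by (simp add: bst_dsumA)
    moreover have "CS (bst (a+b) j) = msum (a+b) (a+b) (map (\<lambda>K. K * bst (a+b) j * dag K) Ks)"
      using act bst_density j by blast
    ultimately have z: "(\<Sum>m\<in>{a..<a+b}. msum (a+b) (a+b) (map (\<lambda>K. K * bst (a+b) j * dag K) Ks) $$ (m,m)) = 0"
      using c by (auto intro!: sum.neutral simp: dsum_index[of _ a a _ b b])
    have sub: "{a..<a+b} \<subseteq> {..<a+b}" by auto
    from kraus_zero_col[OF Ks j sub z K, of i] ia i show ?thesis by auto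
  next
    case False
    then have ia: "i < a" using ij by auto
    have d: "density b (bst b (j-a))" using False j by (intro bst_density) auto
    have c: "CB (bst b (j-a)) \<in> carrier_mat b b" using kraus_carrier[OF KB d] .
    have "CS (bst (a+b) j) = dsum (0\<^sub>m a a) (CB (bst b (j-a)))"
      using BP d False unfolding BP_def by (simp add: bst_dsumB)
    moreover have "CS (bst (a+b) j) = msum (a+b) (a+b) (map (\<lambda>K. K * bst (a+b) j * dag K) Ks)"
      using act bst_density j by blast
    ultimately have "(\<Sum>m\<in>{..<a}. msum (a+b) (a+b) (map (\<lambda>K. K * bst (a+b) j * dag K) Ks) $$ (m,m)) = 0"
      using c by (auto intro!: sum.neutral simp: dsum_index[of _ a a _ b b])
    from kraus_zero_col[OF Ks j _ this K, of i] ia i show ?thesis by auto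
  qed
qed

lemma sum_shift_ivl: "(\<Sum>m\<in>{a..<a+b}. f m) = (\<Sum>i<(b::nat). f (a+i))"
  by (induction b) (auto simp: add.assoc)

lemma map2_dsum_map: "map h (map2 dsum As Bs) = map (\<lambda>(A,B). h (dsum A B)) (zip As Bs)"
  by auto

lemma msum_zip_dsum:
  assumes "length As = length Bs" "\<And>A. A \<in> set As \<Longrightarrow> f A \<in> carrier_mat a a" "\<And>B. B \<in> set Bs \<Longrightarrow> g B \<in> carrier_mat b b"
  shows "msum (a+b) (a+b) (map (\<lambda>(A,B). dsum (f A) (g B)) (zip As Bs)) = dsum (msum a a (map f As)) (msum b b (map g Bs))"
proof -
  have "msum (a+b) (a+b) (map (\<lambda>(A,B). dsum (f A) (g B)) (zip As Bs)) =
        msum (a+b) (a+b) (map (\<lambda>x. dsum (f (fst x)) (g (snd x))) (zip As Bs))"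
    by (rule arg_cong[where f="msum (a+b) (a+b)"]) (auto intro!: map_cong)
  also have "\<dots> = dsum (msum a a (map (\<lambda>x. f (fst x)) (zip As Bs))) (msum b b (map (\<lambda>x. g (snd x)) (zip As Bs)))"
    using assms by (intro msum_dsum) (auto dest: set_zip_leftD set_zip_rightD)
  also have "map (\<lambda>x. f (fst x)) (zip As Bs) = map f (map fst (zip As Bs))" by (simp only: map_map comp_def)
  also have "map fst (zip As Bs) = As" using assms(1) by (rule map_fst_zip)
  also have "map (\<lambda>x. g (snd x)) (zip As Bs) = map g (map snd (zip As Bs))" by (simp only: map_map comp_def)
  also have "map snd (zip As Bs) = Bs" using assms(1) by (rule map_snd_zip)
  finally show ?thesis .
qed

lemma BP_kraus:
  assumes BP: "BP a b CS CA CB" and KA: "is_kraus_rep a a CA As" and KB: "is_kraus_rep b b CB Bs"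
    and KS: "is_kraus_rep (a+b) (a+b) CS Ks"
  shows "is_kraus_rep a a CA (map (blockA a) Ks) \<and> is_kraus_rep b b CB (map (blockB a b) Ks)
       \<and> Ks = map2 dsum (map (blockA a) Ks) (map (blockB a b) Ks)"
proof -
  have Ks: "\<And>K. K \<in> set Ks \<Longrightarrow> K \<in> carrier_mat (a+b) (a+b)"
    and sum: "msum (a+b) (a+b) (map (\<lambda>K. dag K * K) Ks) = 1\<^sub>m (a+b)"
    and act: "\<And>\<rho>. density (a+b) \<rho> \<Longrightarrow> CS \<rho> = msum (a+b) (a+b) (map (\<lambda>K. K * \<rho> * dag K) Ks)"
    using KS unfolding is_kraus_rep_def by auto
  have Kd: "K = dsum (blockA a K) (blockB a b K)" if K: "K \<in> set Ks" for K
    using bdiag_dsum[OF Ks[OF K] BP_bdiag[OF BP KA KB KS K]] .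
  have eqKs: "Ks = map2 dsum (map (blockA a) Ks) (map (blockB a b) Ks)"
    unfolding map2_map_map by (rule sym, rule map_idI, rule Kd[symmetric])
  let ?A = "blockA a" and ?B = "blockB a b"
  have "map (\<lambda>K. dag K * K) Ks = map (\<lambda>K. dsum (dag (?A K) * ?A K) (dag (?B K) * ?B K)) Ks"
  proof (intro map_cong refl)
    fix K assume K: "K \<in> set Ks"
    have "dag (dsum (?A K) (?B K)) * dsum (?A K) (?B K) = dsum (dag (?A K) * ?A K) (dag (?B K) * ?B K)"
      by (simp add: dag_dsum dsum_mult[of _ a a _ a _ b b _ b])
    then show "dag K * K = dsum (dag (?A K) * ?A K) (dag (?B K) * ?B K)"
      unfolding Kd[OF K, symmetric] .
  qed
  with sum have eqd: "dsum (msum a a (map (\<lambda>K. dag (?A K) * ?A K) Ks)) (msum b b (map (\<lambda>K. dag (?B K) * ?B K) Ks)) = dsum (1\<^sub>m a) (1\<^sub>m b)"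
    by (simp add: msum_dsum dsum_one)
  have c1: "msum a a (map (\<lambda>K. dag (?A K) * ?A K) Ks) \<in> carrier_mat a a"
    by (intro msum_map_carrier) auto
  have c2: "msum b b (map (\<lambda>K. dag (?B K) * ?B K) Ks) \<in> carrier_mat b b"
    by (intro msum_map_carrier) auto
  have s1: "msum a a (map (\<lambda>K. dag (?A K) * ?A K) Ks) = 1\<^sub>m a"
  proof -
    have "msum a a (map (\<lambda>K. dag (?A K) * ?A K) Ks) = blockA a (dsum (msum a a (map (\<lambda>K. dag (?A K) * ?A K) Ks)) (msum b b (map (\<lambda>K. dag (?B K) * ?B K) Ks)))"
      using c1 c2 by (simp add: blockA_dsum)
    also have "\<dots> = 1\<^sub>m a" unfolding eqd by (simp add: blockA_dsum)
    finally show ?thesis .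
  qed
  have s2: "msum b b (map (\<lambda>K. dag (?B K) * ?B K) Ks) = 1\<^sub>m b"
  proof -
    have "msum b b (map (\<lambda>K. dag (?B K) * ?B K) Ks) = blockB a b (dsum (msum a a (map (\<lambda>K. dag (?A K) * ?A K) Ks)) (msum b b (map (\<lambda>K. dag (?B K) * ?B K) Ks)))"
      using c1 c2 by (simp add: blockB_dsum)
    also have "\<dots> = 1\<^sub>m b" unfolding eqd by (simp add: blockB_dsum)
    finally show ?thesis .
  qed
  have actA: "CA \<rho> = msum a a (map (\<lambda>K. ?A K * \<rho> * dag (?A K)) Ks)" if d: "density a \<rho>" for \<rho>
  proof -
    have r: "\<rho> \<in> carrier_mat a a" using d by (rule density_carrier)
    have c: "CA \<rho> \<in> carrier_mat a a" using kraus_carrier[OF KA d] .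
    have "dsum (CA \<rho>) (0\<^sub>m b b) = CS (dsum \<rho> (0\<^sub>m b b))" using BP d unfolding BP_def by simp
    also have "\<dots> = msum (a+b) (a+b) (map (\<lambda>K. K * dsum \<rho> (0\<^sub>m b b) * dag K) Ks)"
      using act density_dsumA[OF d] by blast
    also have "map (\<lambda>K. K * dsum \<rho> (0\<^sub>m b b) * dag K) Ks = map (\<lambda>K. dsum (?A K * \<rho> * dag (?A K)) (?B K * 0\<^sub>m b b * dag (?B K))) Ks"
    proof (intro map_cong refl)
      fix K assume K: "K \<in> set Ks"
      have "dsum (?A K) (?B K) * dsum \<rho> (0\<^sub>m b b) * dag (dsum (?A K) (?B K)) = dsum (?A K * \<rho> * dag (?A K)) (?B K * 0\<^sub>m b b * dag (?B K))"
        by (rule sandwich_dsum) (use r in auto)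
      then show "K * dsum \<rho> (0\<^sub>m b b) * dag K = dsum (?A K * \<rho> * dag (?A K)) (?B K * 0\<^sub>m b b * dag (?B K))"
        unfolding Kd[OF K, symmetric] .
    qed
    also have "msum (a+b) (a+b) \<dots> = dsum (msum a a (map (\<lambda>K. ?A K * \<rho> * dag (?A K)) Ks)) (msum b b (map (\<lambda>K. ?B K * 0\<^sub>m b b * dag (?B K)) Ks))"
      using r by (intro msum_dsum) auto
    finally have "dsum (CA \<rho>) (0\<^sub>m b b) = dsum (msum a a (map (\<lambda>K. ?A K * \<rho> * dag (?A K)) Ks)) (msum b b (map (\<lambda>K. ?B K * 0\<^sub>m b b * dag (?B K)) Ks))" .
    note fin = this
    have cX: "msum a a (map (\<lambda>K. ?A K * \<rho> * dag (?A K)) Ks) \<in> carrier_mat a a" using r by (intro msum_map_carrier) auto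
    have cY: "msum b b (map (\<lambda>K. ?B K * 0\<^sub>m b b * dag (?B K)) Ks) \<in> carrier_mat b b" using r by (intro msum_map_carrier) auto
    have "CA \<rho> = blockA a (dsum (CA \<rho>) (0\<^sub>m b b))" using c by (simp add: blockA_dsum)
    also have "\<dots> = blockA a (dsum (msum a a (map (\<lambda>K. ?A K * \<rho> * dag (?A K)) Ks)) (msum b b (map (\<lambda>K. ?B K * 0\<^sub>m b b * dag (?B K)) Ks)))" using fin by simp
    also have "\<dots> = msum a a (map (\<lambda>K. ?A K * \<rho> * dag (?A K)) Ks)" using cX cY by (simp add: blockA_dsum)
    finally show ?thesis .
  qed
  have actB: "CB \<rho> = msum b b (map (\<lambda>K. ?B K * \<rho> * dag (?B K)) Ks)" if d: "density b \<rho>" for \<rho>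
  proof -
    have r: "\<rho> \<in> carrier_mat b b" using d by (rule density_carrier)
    have c: "CB \<rho> \<in> carrier_mat b b" using kraus_carrier[OF KB d] .
    have "dsum (0\<^sub>m a a) (CB \<rho>) = CS (dsum (0\<^sub>m a a) \<rho>)" using BP d unfolding BP_def by simp
    also have "\<dots> = msum (a+b) (a+b) (map (\<lambda>K. K * dsum (0\<^sub>m a a) \<rho> * dag K) Ks)"
      using act density_dsumB[OF d] by blast
    also have "map (\<lambda>K. K * dsum (0\<^sub>m a a) \<rho> * dag K) Ks = map (\<lambda>K. dsum (?A K * 0\<^sub>m a a * dag (?A K)) (?B K * \<rho> * dag (?B K))) Ks"
    proof (intro map_cong refl)
      fix K assume K: "K \<in> set Ks"
      have "dsum (?A K) (?B K) * dsum (0\<^sub>m a a) \<rho> * dag (dsum (?A K) (?B K)) = dsum (?A K * 0\<^sub>m a a * dag (?A K)) (?B K * \<rho> * dag (?B K))"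
        by (rule sandwich_dsum) (use r in auto)
      then show "K * dsum (0\<^sub>m a a) \<rho> * dag K = dsum (?A K * 0\<^sub>m a a * dag (?A K)) (?B K * \<rho> * dag (?B K))"
        unfolding Kd[OF K, symmetric] .
    qed
    also have "msum (a+b) (a+b) \<dots> = dsum (msum a a (map (\<lambda>K. ?A K * 0\<^sub>m a a * dag (?A K)) Ks)) (msum b b (map (\<lambda>K. ?B K * \<rho> * dag (?B K)) Ks))"
      using r by (intro msum_dsum) auto
    finally have "dsum (0\<^sub>m a a) (CB \<rho>) = dsum (msum a a (map (\<lambda>K. ?A K * 0\<^sub>m a a * dag (?A K)) Ks)) (msum b b (map (\<lambda>K. ?B K * \<rho> * dag (?B K)) Ks))" .
    note fin = this
    have cX: "msum a a (map (\<lambda>K. ?A K * 0\<^sub>m a a * dag (?A K)) Ks) \<in> carrier_mat a a" using r by (intro msum_map_carrier) auto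
    have cY: "msum b b (map (\<lambda>K. ?B K * \<rho> * dag (?B K)) Ks) \<in> carrier_mat b b" using r by (intro msum_map_carrier) auto
    have "CB \<rho> = blockB a b (dsum (0\<^sub>m a a) (CB \<rho>))" using c by (simp add: blockB_dsum)
    also have "\<dots> = blockB a b (dsum (msum a a (map (\<lambda>K. ?A K * 0\<^sub>m a a * dag (?A K)) Ks)) (msum b b (map (\<lambda>K. ?B K * \<rho> * dag (?B K)) Ks)))" using fin by simp
    also have "\<dots> = msum b b (map (\<lambda>K. ?B K * \<rho> * dag (?B K)) Ks)" using cX cY by (simp add: blockB_dsum)
    finally show ?thesis .
  qed
  have "is_kraus_rep a a CA (map ?A Ks)"
    unfolding is_kraus_rep_def using s1 actA by (simp add: comp_def)
  moreover have "is_kraus_rep b b CB (map ?B Ks)"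
    unfolding is_kraus_rep_def using s2 actB by (simp add: comp_def)
  ultimately show ?thesis using eqKs by simp
qed

lemma kraus2_BP:
  assumes len: "length As = length Bs" and KA: "is_kraus_rep a a CA As" and KB: "is_kraus_rep b b CB Bs"
    and KS: "is_kraus_rep (a+b) (a+b) CS (map2 dsum As Bs)"
  shows "BP a b CS CA CB"
proof -
  have As: "\<And>A. A \<in> set As \<Longrightarrow> A \<in> carrier_mat a a"
    and actA: "\<And>\<rho>. density a \<rho> \<Longrightarrow> CA \<rho> = msum a a (map (\<lambda>K. K * \<rho> * dag K) As)"
    using KA unfolding is_kraus_rep_def by auto
  have Bs: "\<And>B. B \<in> set Bs \<Longrightarrow> B \<in> carrier_mat b b"
    and actB: "\<And>\<rho>. density b \<rho> \<Longrightarrow> CB \<rho> = msum b b (map (\<lambda>K. K * \<rho> * dag K) Bs)"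
    using KB unfolding is_kraus_rep_def by auto
  have actS: "\<And>\<rho>. density (a+b) \<rho> \<Longrightarrow> CS \<rho> = msum (a+b) (a+b) (map (\<lambda>K. K * \<rho> * dag K) (map2 dsum As Bs))"
    using KS unfolding is_kraus_rep_def by auto
  have gen: "msum (a+b) (a+b) (map (\<lambda>K. K * dsum X Y * dag K) (map2 dsum As Bs))
      = dsum (msum a a (map (\<lambda>A. A * X * dag A) As)) (msum b b (map (\<lambda>B. B * Y * dag B) Bs))"
    if X: "X \<in> carrier_mat a a" and Y: "Y \<in> carrier_mat b b" for X Y
  proof -
    have "map (\<lambda>K. K * dsum X Y * dag K) (map2 dsum As Bs) = map (\<lambda>(A,B). dsum (A * X * dag A) (B * Y * dag B)) (zip As Bs)"
      unfolding map2_dsum_map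
    proof (intro map_cong refl)
      fix x assume x: "x \<in> set (zip As Bs)"
      obtain A B where xAB: "x = (A,B)" by fastforce
      have "A \<in> carrier_mat a a" "B \<in> carrier_mat b b"
        using x xAB As Bs by (auto dest: set_zip_leftD set_zip_rightD)
      then show "(\<lambda>(A,B). dsum A B * dsum X Y * dag (dsum A B)) x = (\<lambda>(A,B). dsum (A * X * dag A) (B * Y * dag B)) x"
        using X Y xAB by (simp add: sandwich_dsum)
    qed
    note meq = this
    show ?thesis unfolding meq
      by (rule msum_zip_dsum[where f="\<lambda>A. A * X * dag A" and g="\<lambda>B. B * Y * dag B"]) (use X Y As Bs len in auto)
  qed
  have z: "msum n n (map (\<lambda>B. B * 0\<^sub>m n n * dag B) Cs) = 0\<^sub>m n n" if "\<And>B. B \<in> set Cs \<Longrightarrow> B \<in> carrier_mat n n" for n Cs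
  proof -
    have "map (\<lambda>B. B * 0\<^sub>m n n * dag B) Cs = map (\<lambda>B. 0\<^sub>m n n) Cs"
    proof (intro map_cong refl)
      fix B assume "B \<in> set Cs" then have "B \<in> carrier_mat n n" using that by auto
      then show "B * 0\<^sub>m n n * dag B = 0\<^sub>m n n" by simp
    qed
    then show ?thesis by (simp only: msum_zeros)
  qed
  show ?thesis unfolding BP_def
  proof (intro conjI allI impI)
    fix \<rho> assume d: "density a \<rho>"
    have r: "\<rho> \<in> carrier_mat a a" using d by (rule density_carrier)
    show "CS (dsum \<rho> (0\<^sub>m b b)) = dsum (CA \<rho>) (0\<^sub>m b b)"
      using actS[OF density_dsumA[OF d]] gen[OF r, of "0\<^sub>m b b"] actA[OF d] z[OF Bs] by simp
  next
    fix \<rho> assume d: "density b \<rho>"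
    have r: "\<rho> \<in> carrier_mat b b" using d by (rule density_carrier)
    show "CS (dsum (0\<^sub>m a a) \<rho>) = dsum (0\<^sub>m a a) (CB \<rho>)"
      using actS[OF density_dsumB[OF d]] gen[OF _ r, of "0\<^sub>m a a"] actB[OF d] z[OF As] by simp
  qed
qed

lemma projA_carrier[simp]: "projA a b \<in> carrier_mat (a+b) (a+b)" unfolding projA_def by auto
lemma projB_carrier[simp]: "projB a b \<in> carrier_mat (a+b) (a+b)" unfolding projB_def by auto
lemma projA_dims[simp]: "dim_row (projA a b) = a+b" "dim_col (projA a b) = a+b" unfolding projA_def by auto
lemma projB_dims[simp]: "dim_row (projB a b) = a+b" "dim_col (projB a b) = a+b" unfolding projB_def by auto

lemma mtrace_projA: assumes M: "M \<in> carrier_mat (a+b) (a+b)"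
  shows "mtrace (projA a b * M) = (\<Sum>i<a. M $$ (i,i))"
proof -
  have "mtrace (projA a b * M) = (\<Sum>i<a+b. \<Sum>l<a+b. projA a b $$ (i,l) * M $$ (l,i))"
    using M by (simp add: mtrace_def)
  also have "\<dots> = (\<Sum>i<a+b. if i < a then M $$ (i,i) else 0)"
  proof (intro sum.cong refl)
    fix i assume i: "i \<in> {..<a+b}"
    have "(\<Sum>l<a+b. projA a b $$ (i,l) * M $$ (l,i)) = (\<Sum>l<a+b. if l = i \<and> i < a then M $$ (l,i) else 0)"
      using i by (intro sum.cong refl) (auto simp: projA_def dsum_index[of _ a a _ b b])
    also have "\<dots> = (if i < a then M $$ (i,i) else 0)" using i by (auto simp: sum.delta)
    finally show "(\<Sum>l<a+b. projA a b $$ (i,l) * M $$ (l,i)) = (if i < a then M $$ (i,i) else 0)" .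
  qed
  also have "\<dots> = (\<Sum>i<a. M $$ (i,i))" by (simp add: sum_split_add)
  finally show ?thesis .
qed

lemma mtrace_projB: assumes M: "M \<in> carrier_mat (a+b) (a+b)"
  shows "mtrace (projB a b * M) = (\<Sum>i<b. M $$ (a+i,a+i))"
proof -
  have "mtrace (projB a b * M) = (\<Sum>i<a+b. \<Sum>l<a+b. projB a b $$ (i,l) * M $$ (l,i))"
    using M by (simp add: mtrace_def)
  also have "\<dots> = (\<Sum>i<a+b. if a \<le> i then M $$ (i,i) else 0)"
  proof (intro sum.cong refl)
    fix i assume i: "i \<in> {..<a+b}"
    have "(\<Sum>l<a+b. projB a b $$ (i,l) * M $$ (l,i)) = (\<Sum>l<a+b. if l = i \<and> a \<le> i then M $$ (l,i) else 0)"
      using i by (intro sum.cong refl) (auto simp: projB_def dsum_index[of _ a a _ b b])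
    also have "\<dots> = (if a \<le> i then M $$ (i,i) else 0)" using i by (auto simp: sum.delta)
    finally show "(\<Sum>l<a+b. projB a b $$ (i,l) * M $$ (l,i)) = (if a \<le> i then M $$ (i,i) else 0)" .
  qed
  also have "\<dots> = (\<Sum>i<b. M $$ (a+i,a+i))" by (simp add: sum_split_add)
  finally show ?thesis .
qed

lemma mtrace_split: assumes M: "M \<in> carrier_mat (a+b) (a+b)"
  shows "mtrace M = (\<Sum>i<a. M $$ (i,i)) + (\<Sum>i<b. M $$ (a+i,a+i))"
  using M by (simp add: mtrace_def sum_split_add)

lemma noleak_bdiag:
  assumes NA: "no_leakage (a+b) (projA a b) CS" and NB: "no_leakage (a+b) (projB a b) CS"
    and KS: "is_kraus_rep (a+b) (a+b) CS Ks" and K: "K \<in> set Ks"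
  shows "bdiag a b K"
  unfolding bdiag_def
proof (intro allI impI)
  fix i j assume i: "i < a+b" and j: "j < a+b" and ij: "(i < a) \<noteq> (j < a)"
  have Ks: "\<And>K. K \<in> set Ks \<Longrightarrow> K \<in> carrier_mat (a+b) (a+b)"
    and act: "\<And>\<rho>. density (a+b) \<rho> \<Longrightarrow> CS \<rho> = msum (a+b) (a+b) (map (\<lambda>K. K * \<rho> * dag K) Ks)"
    using KS unfolding is_kraus_rep_def by auto
  let ?r = "bst (a+b) j"
  have d: "density (a+b) ?r" using j by (rule bst_density)
  have c: "CS ?r \<in> carrier_mat (a+b) (a+b)" using kraus_carrier[OF KS d] .
  have t1: "mtrace (CS ?r) = 1" using kraus_trace_pres[OF KS d] .
  have e: "CS ?r = msum (a+b) (a+b) (map (\<lambda>K. K * ?r * dag K) Ks)" using act[OF d] .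
  show "K $$ (i,j) = 0"
  proof (cases "j < a")
    case True
    then have ia: "a \<le> i" using ij by auto
    have "mtrace (?r * projA a b) = mtrace (projA a b * ?r)" by (rule mtrace_comm) auto
    also have "\<dots> = 1" using True by (simp add: mtrace_projA bst_index)
    finally have "mtrace (projA a b * CS ?r) = 1" using NA d unfolding no_leakage_def by blast
    then have "(\<Sum>i<a. CS ?r $$ (i,i)) = 1" using c by (simp add: mtrace_projA)
    with t1 mtrace_split[OF c] have "(\<Sum>i<b. CS ?r $$ (a+i,a+i)) = 0" by simp
    then have z: "(\<Sum>m\<in>{a..<a+b}. msum (a+b) (a+b) (map (\<lambda>K. K * ?r * dag K) Ks) $$ (m,m)) = 0"
      by (simp add: sum_shift_ivl e)
    have sub: "{a..<a+b} \<subseteq> {..<a+b}" by auto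
    from kraus_zero_col[OF Ks j sub z K, of i] ia i show ?thesis by auto
  next
    case False
    then have ia: "i < a" using ij by auto
    have "mtrace (?r * projB a b) = mtrace (projB a b * ?r)" by (rule mtrace_comm) auto
    also have "\<dots> = (\<Sum>l<b. ?r $$ (a+l,a+l))" by (simp add: mtrace_projB)
    also have "\<dots> = (\<Sum>l<b. if l = j - a then 1 else 0)"
      using False by (intro sum.cong refl) (auto simp: bst_index)
    also have "\<dots> = 1" using False j by simp
    finally have "mtrace (projB a b * CS ?r) = 1" using NB d unfolding no_leakage_def by blast
    then have "(\<Sum>i<b. CS ?r $$ (a+i,a+i)) = 1" using c by (simp add: mtrace_projB)
    with t1 mtrace_split[OF c] have z: "(\<Sum>m\<in>{..<a}. msum (a+b) (a+b) (map (\<lambda>K. K * ?r * dag K) Ks) $$ (m,m)) = 0"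
      by (simp add: e)
    have sub: "{..<a} \<subseteq> {..<a+b}" by auto
    from kraus_zero_col[OF Ks j sub z K, of i] ia i show ?thesis by auto
  qed
qed

lemma kraus2_noleak:
  assumes len: "length As = length Bs" and KA: "is_kraus_rep a a CA As" and KB: "is_kraus_rep b b CB Bs"
    and KS: "is_kraus_rep (a+b) (a+b) CS (map2 dsum As Bs)"
  shows "no_leakage (a+b) (projA a b) CS \<and> no_leakage (a+b) (projB a b) CS"
proof -
  have As: "\<And>A. A \<in> set As \<Longrightarrow> A \<in> carrier_mat a a"
    and sA: "msum a a (map (\<lambda>K. dag K * K) As) = 1\<^sub>m a"
    using KA unfolding is_kraus_rep_def by auto
  have Bs: "\<And>B. B \<in> set Bs \<Longrightarrow> B \<in> carrier_mat b b"
    and sB: "msum b b (map (\<lambda>K. dag K * K) Bs) = 1\<^sub>m b"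
    using KB unfolding is_kraus_rep_def by auto
  let ?Ks = "map2 dsum As Bs"
  have Ks: "\<And>K. K \<in> set ?Ks \<Longrightarrow> K \<in> carrier_mat (a+b) (a+b)"
    and actS: "\<And>\<rho>. density (a+b) \<rho> \<Longrightarrow> CS \<rho> = msum (a+b) (a+b) (map (\<lambda>K. K * \<rho> * dag K) ?Ks)"
    using KS unfolding is_kraus_rep_def by auto
  have gen: "msum (a+b) (a+b) (map (\<lambda>K. dag K * dsum X Y * K) ?Ks)
      = dsum (msum a a (map (\<lambda>A. dag A * X * A) As)) (msum b b (map (\<lambda>B. dag B * Y * B) Bs))"
    if X: "X \<in> carrier_mat a a" and Y: "Y \<in> carrier_mat b b" for X Y
  proof -
    have "map (\<lambda>K. dag K * dsum X Y * K) ?Ks = map (\<lambda>(A,B). dsum (dag A * X * A) (dag B * Y * B)) (zip As Bs)"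
      unfolding map2_dsum_map
    proof (intro map_cong refl)
      fix x assume x: "x \<in> set (zip As Bs)"
      obtain A B where xAB: "x = (A,B)" by fastforce
      have "A \<in> carrier_mat a a" "B \<in> carrier_mat b b"
        using x xAB As Bs by (auto dest: set_zip_leftD set_zip_rightD)
      then show "(\<lambda>(A,B). dag (dsum A B) * dsum X Y * dsum A B) x = (\<lambda>(A,B). dsum (dag A * X * A) (dag B * Y * B)) x"
        using X Y xAB by (simp add: sandwich2_dsum)
    qed
    note meq = this
    show ?thesis unfolding meq
      by (rule msum_zip_dsum[where f="\<lambda>A. dag A * X * A" and g="\<lambda>B. dag B * Y * B"]) (use X Y As Bs len in auto)
  qed
  have z: "msum n n (map (\<lambda>B. dag B * 0\<^sub>m n n * B) Cs) = 0\<^sub>m n n" if "\<And>B. B \<in> set Cs \<Longrightarrow> B \<in> carrier_mat n n" for n Cs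
  proof -
    have "map (\<lambda>B. dag B * 0\<^sub>m n n * B) Cs = map (\<lambda>B. 0\<^sub>m n n) Cs"
    proof (intro map_cong refl)
      fix B assume "B \<in> set Cs" then have "B \<in> carrier_mat n n" using that by auto
      then show "dag B * 0\<^sub>m n n * B = 0\<^sub>m n n" by simp
    qed
    then show ?thesis by (simp only: msum_zeros)
  qed
  have o: "msum n n (map (\<lambda>B. dag B * 1\<^sub>m n * B) Cs) = msum n n (map (\<lambda>B. dag B * B) Cs)" if "\<And>B. B \<in> set Cs \<Longrightarrow> B \<in> carrier_mat n n" for n Cs
  proof -
    have "map (\<lambda>B. dag B * 1\<^sub>m n * B) Cs = map (\<lambda>B. dag B * B) Cs"
    proof (intro map_cong refl)
      fix B assume "B \<in> set Cs" then have "B \<in> carrier_mat n n" using that by auto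
      then show "dag B * 1\<^sub>m n * B = dag B * B" by simp
    qed
    then show ?thesis by (rule arg_cong)
  qed
  have PA: "msum (a+b) (a+b) (map (\<lambda>K. dag K * projA a b * K) ?Ks) = projA a b"
    unfolding projA_def using gen[of "1\<^sub>m a" "0\<^sub>m b b"] z[OF Bs] o[OF As] sA by simp
  have PB: "msum (a+b) (a+b) (map (\<lambda>K. dag K * projB a b * K) ?Ks) = projB a b"
    unfolding projB_def using gen[of "0\<^sub>m a a" "1\<^sub>m b"] z[OF As] o[OF Bs] sB by simp
  have gl: "mtrace (P * CS \<rho>) = 1"
    if d: "density (a+b) \<rho>" and t: "mtrace (\<rho> * P) = 1" and P: "P \<in> carrier_mat (a+b) (a+b)"
      and PP: "msum (a+b) (a+b) (map (\<lambda>K. dag K * P * K) ?Ks) = P" for \<rho> P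
  proof -
    have r: "\<rho> \<in> carrier_mat (a+b) (a+b)" using d by (rule density_carrier)
    have kt: "mtrace (P * msum (a+b) (a+b) (map (\<lambda>K. K * \<rho> * dag K) ?Ks)) = mtrace (msum (a+b) (a+b) (map (\<lambda>K. dag K * P * K) ?Ks) * \<rho>)"
      by (rule kraus_trace[OF P r]) (rule Ks)
    have "mtrace (P * CS \<rho>) = mtrace (P * \<rho>)"
      unfolding actS[OF d] kt PP ..
    also have "\<dots> = mtrace (\<rho> * P)" using P r by (rule mtrace_comm)
    finally show ?thesis using t by simp
  qed
  show ?thesis unfolding no_leakage_def using gl PA PB by auto
qed

lemma one_to_two:
  assumes S: "superposition_of a b CS CA CB" and CS: "is_channel (a+b) (a+b) CS"
  shows "\<exists>As Bs. length As = length Bs \<and> is_kraus_rep a a CA As \<and> is_kraus_rep b b CB Bs \<and>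
                  is_kraus_rep (a+b) (a+b) CS (map2 dsum As Bs)"
proof -
  obtain Ks where KS: "is_kraus_rep (a+b) (a+b) CS Ks" using CS unfolding is_channel_def by auto
  have NA: "no_leakage (a+b) (projA a b) CS" and NB: "no_leakage (a+b) (projB a b) CS"
    and RA: "restriction_A_is a b CS CA" and RB: "restriction_B_is a b CS CB"
    using S unfolding superposition_of_def by auto
  have Ks: "\<And>K. K \<in> set Ks \<Longrightarrow> K \<in> carrier_mat (a+b) (a+b)" using KS unfolding is_kraus_rep_def by auto
  have Kd: "K = dsum (blockA a K) (blockB a b K)" if K: "K \<in> set Ks" for K
    using bdiag_dsum[OF Ks[OF K] noleak_bdiag[OF NA NB KS K]] .
  have eqKs: "Ks = map2 dsum (map (blockA a) Ks) (map (blockB a b) Ks)"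
    unfolding map2_map_map by (rule sym, rule map_idI, rule Kd[symmetric])
  have "is_kraus_rep a a CA (map (blockA a) Ks)" using RA KS unfolding restriction_A_is_def by auto
  moreover have "is_kraus_rep b b CB (map (blockB a b) Ks)" using RB KS unfolding restriction_B_is_def by auto
  moreover have "is_kraus_rep (a+b) (a+b) CS (map2 dsum (map (blockA a) Ks) (map (blockB a b) Ks))"
    using KS eqKs by simp
  ultimately show ?thesis by (intro exI[of _ "map (blockA a) Ks"] exI[of _ "map (blockB a b) Ks"]) auto
qed

lemma two_to_one:
  assumes len: "length As = length Bs" and KA: "is_kraus_rep a a CA As" and KB: "is_kraus_rep b b CB Bs"
    and KS: "is_kraus_rep (a+b) (a+b) CS (map2 dsum As Bs)"
  shows "superposition_of a b CS CA CB"
proof -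
  have BP: "BP a b CS CA CB" using kraus2_BP[OF assms] .
  show ?thesis unfolding superposition_of_def restriction_A_is_def restriction_B_is_def
    using kraus2_noleak[OF assms] BP_kraus[OF BP KA KB] by auto
qed

definition Jm :: "nat \<Rightarrow> nat \<Rightarrow> complex mat list \<Rightarrow> complex mat" where
  "Jm n e Ks = mat (n*e) (n*e) (\<lambda>(p,q). if q mod e = 0 \<and> p mod e \<noteq> 0 then (Ks ! (p mod e - 1)) $$ (p div e, q div e) else 0)"

definition Pm :: "nat \<Rightarrow> nat \<Rightarrow> complex mat" where
  "Pm N e = mat N N (\<lambda>(p,q). if p = q \<and> p mod e = 0 then 1 else 0)"

lemma Jm_carrier[simp]: "Jm n e Ks \<in> carrier_mat (n*e) (n*e)" unfolding Jm_def by auto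
lemma Jm_dims[simp]: "dim_row (Jm n e Ks) = n*e" "dim_col (Jm n e Ks) = n*e" unfolding Jm_def by auto
lemma Pm_carrier[simp]: "Pm N e \<in> carrier_mat N N" unfolding Pm_def by auto
lemma Pm_dims[simp]: "dim_row (Pm N e) = N" "dim_col (Pm N e) = N" unfolding Pm_def by auto

lemma Jm_index: "p < n*e \<Longrightarrow> q < n*e \<Longrightarrow> Jm n e Ks $$ (p,q) =
   (if q mod e = 0 \<and> p mod e \<noteq> 0 then (Ks ! (p mod e - 1)) $$ (p div e, q div e) else 0)"
  unfolding Jm_def by auto

lemma Pm_index: "p < N \<Longrightarrow> q < N \<Longrightarrow> Pm N e $$ (p,q) = (if p = q \<and> p mod e = 0 then 1 else 0)"
  unfolding Pm_def by auto

lemma idx_div[simp]: "k < e \<Longrightarrow> (i*e+k) div (e::nat) = i" by auto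
lemma idx_mod[simp]: "k < e \<Longrightarrow> (i*e+k) mod (e::nat) = k" by auto
lemma idx_less: "i < n \<Longrightarrow> k < e \<Longrightarrow> i*e+k < n*(e::nat)"
proof -
  assume "i < n" "k < e"
  then have "i*e + k < i*e + e" by simp
  also have "\<dots> = (i+1)*e" by simp
  also have "\<dots> \<le> n*e" using \<open>i < n\<close> by (intro mult_right_mono) auto
  finally show ?thesis .
qed

lemma sum_mult_split: "(\<Sum>l<(n::nat)*e. f l) = (\<Sum>i<n. \<Sum>k<e. f (i*e+k))"
proof (induction n)
  case (Suc n)
  have "(\<Sum>l<Suc n * e. f l) = (\<Sum>l<n*e + e. f l)" by (simp add: add.commute)
  also have "\<dots> = (\<Sum>l<n*e. f l) + (\<Sum>k<e. f (n*e+k))" by (rule sum_split_add)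
  finally show ?case using Suc by simp
qed simp

lemma div_lt: "p < n*e \<Longrightarrow> p div e < (n::nat)"
  by (metis div_less_iff_less_mult mult_zero_right not_less_zero nat_neq_iff mult.commute)

lemma Pm_left: assumes "M \<in> carrier_mat N m" "p < N" "q < m"
  shows "(Pm N e * M) $$ (p,q) = (if p mod e = 0 then M $$ (p,q) else 0)"
proof -
  have "(Pm N e * M) $$ (p,q) = (\<Sum>l<N. Pm N e $$ (p,l) * M $$ (l,q))" using assms by simp
  also have "\<dots> = (\<Sum>l<N. if l = p then (if p mod e = 0 then M $$ (p,q) else 0) else 0)"
    using assms by (intro sum.cong refl) (auto simp: Pm_index)
  also have "\<dots> = (if p mod e = 0 then M $$ (p,q) else 0)" using assms by (simp add: sum.delta')
  finally show ?thesis .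
qed

lemma Pm_right: assumes "M \<in> carrier_mat m N" "p < m" "q < N"
  shows "(M * Pm N e) $$ (p,q) = (if q mod e = 0 then M $$ (p,q) else 0)"
proof -
  have "(M * Pm N e) $$ (p,q) = (\<Sum>l<N. M $$ (p,l) * Pm N e $$ (l,q))" using assms by simp
  also have "\<dots> = (\<Sum>l<N. if l = q then (if q mod e = 0 then M $$ (p,q) else 0) else 0)"
    using assms by (intro sum.cong refl) (auto simp: Pm_index)
  also have "\<dots> = (if q mod e = 0 then M $$ (p,q) else 0)" using assms by (simp add: sum.delta')
  finally show ?thesis .
qed

context
  fixes n e :: nat and Ks :: "complex mat list"
begin

abbreviation "J \<equiv> Jm n e Ks"
abbreviation "P \<equiv> Pm (n*e) e"

lemma JP: "J * P = J"
  by (rule eq_matI) (auto simp del: mult_index_sum simp: Pm_right[of _ "n*e"] Jm_index)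

lemma PJ: "P * J = 0\<^sub>m (n*e) (n*e)"
  by (rule eq_matI) (auto simp del: mult_index_sum simp: Pm_left[of _ "n*e" "n*e"] Jm_index)

lemma PP: "P * P = P"
  by (rule eq_matI) (auto simp del: mult_index_sum simp: Pm_left[of _ "n*e" "n*e"] Pm_index)

lemma dJP: "dag J * P = 0\<^sub>m (n*e) (n*e)"
  by (rule eq_matI) (auto simp del: mult_index_sum simp: Pm_right[of _ "n*e"] Jm_index)

lemma PdJ: "P * dag J = dag J"
  by (rule eq_matI) (auto simp del: mult_index_sum simp: Pm_left[of _ "n*e" "n*e"] Jm_index)

lemma dagP: "dag P = P"
  by (rule eq_matI) (auto simp: Pm_index)

lemma JJ: "J * J = 0\<^sub>m (n*e) (n*e)"
proof (rule eq_matI)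
  fix p q assume "p < dim_row (0\<^sub>m (n*e) (n*e))" "q < dim_col (0\<^sub>m (n*e) (n*e))"
  then have pq: "p < n*e" "q < n*e" by auto
  have "(J * J) $$ (p,q) = (\<Sum>l<n*e. J $$ (p,l) * J $$ (l,q))" using pq by simp
  also have "\<dots> = 0" using pq by (intro sum.neutral) (auto simp: Jm_index)
  finally show "(J * J) $$ (p,q) = 0\<^sub>m (n*e) (n*e) $$ (p,q)" using pq by simp
qed auto

lemma sum_list_map_nth: "(\<Sum>x\<leftarrow>xs. f x) = (\<Sum>k<length xs. f (xs ! k))"
  by (simp add: sum_list_sum_nth atLeast0LessThan)

lemma sum_lessThan_pos: "0 < e \<Longrightarrow> (\<Sum>k<e. g k) = g 0 + (\<Sum>k<e - 1. g (Suc k))"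
  by (cases e) (simp_all del: sum.lessThan_Suc add: sum.lessThan_Suc_shift)

lemma dJJ:
  assumes e: "e = length Ks + 1" and Ks: "\<And>K. K \<in> set Ks \<Longrightarrow> K \<in> carrier_mat n n"
    and sum: "msum n n (map (\<lambda>K. dag K * K) Ks) = 1\<^sub>m n"
  shows "dag J * J = P"
proof (rule eq_matI)
  fix p q assume "p < dim_row P" "q < dim_col P"
  then have pq: "p < n*e" "q < n*e" by auto
  let ?r = "length Ks"
  have epos: "0 < e" using e by simp
  have em1: "e - 1 = length Ks" using e by simp
  have pd: "p div e < n" "q div e < n" using pq div_lt by auto
  have "(dag J * J) $$ (p,q) = (\<Sum>l<n*e. cnj (J $$ (l,p)) * J $$ (l,q))" using pq by simp
  also have "\<dots> = (\<Sum>i<n. \<Sum>k<e. cnj (J $$ (i*e+k,p)) * J $$ (i*e+k,q))" by (rule sum_mult_split)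
  also have "\<dots> = (\<Sum>i<n. \<Sum>k<e. if p mod e = 0 \<and> q mod e = 0 \<and> k \<noteq> 0 then
      cnj ((Ks ! (k - 1)) $$ (i, p div e)) * (Ks ! (k - 1)) $$ (i, q div e) else 0)"
    using pq by (intro sum.cong refl) (auto simp: Jm_index idx_less)
  also have "\<dots> = (\<Sum>i<n. \<Sum>k<?r. if p mod e = 0 \<and> q mod e = 0 then
      cnj ((Ks ! k) $$ (i, p div e)) * (Ks ! k) $$ (i, q div e) else 0)"
    by (simp only: sum_lessThan_pos[OF epos] em1) (simp cong: if_cong)
  also have "\<dots> = (if p mod e = 0 \<and> q mod e = 0 then (\<Sum>k<?r. \<Sum>i<n.
      cnj ((Ks ! k) $$ (i, p div e)) * (Ks ! k) $$ (i, q div e)) else 0)"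
    by (subst sum.swap) simp
  also have "(\<Sum>k<?r. \<Sum>i<n. cnj ((Ks ! k) $$ (i, p div e)) * (Ks ! k) $$ (i, q div e))
      = msum n n (map (\<lambda>K. dag K * K) Ks) $$ (p div e, q div e)"
  proof -
    have "msum n n (map (\<lambda>K. dag K * K) Ks) $$ (p div e, q div e) = (\<Sum>K\<leftarrow>Ks. (dag K * K) $$ (p div e, q div e))"
      using Ks pd by (intro msum_map_index) auto
    also have "\<dots> = (\<Sum>k<?r. (dag (Ks!k) * (Ks!k)) $$ (p div e, q div e))" by (rule sum_list_map_nth)
    also have "\<dots> = (\<Sum>k<?r. \<Sum>i<n. cnj ((Ks ! k) $$ (i, p div e)) * (Ks ! k) $$ (i, q div e))"
    proof (intro sum.cong refl)
      fix k assume "k \<in> {..<?r}"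
      then have "Ks ! k \<in> carrier_mat n n" using Ks by auto
      then show "(dag (Ks!k) * (Ks!k)) $$ (p div e, q div e) = (\<Sum>i<n. cnj ((Ks ! k) $$ (i, p div e)) * (Ks ! k) $$ (i, q div e))"
        using pd by simp
    qed
    finally show ?thesis by simp
  qed
  also have "(if p mod e = 0 \<and> q mod e = 0 then msum n n (map (\<lambda>K. dag K * K) Ks) $$ (p div e, q div e) else 0) = P $$ (p,q)"
  proof (cases "p mod e = 0 \<and> q mod e = 0")
    case True
    then have "p = p div e * e" "q = q div e * e" by (metis div_mult_mod_eq add_0_right)+
    then have "(p div e = q div e) = (p = q)" by metis
    then show ?thesis using True pq pd by (simp add: sum Pm_index)
  next
    case False
    then show ?thesis using pq by (auto simp: Pm_index)
  qed
  finally show "(dag J * J) $$ (p,q) = P $$ (p,q)" .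
qed auto

end

definition Wm :: "nat \<Rightarrow> nat \<Rightarrow> complex mat list \<Rightarrow> complex mat" where
  "Wm n e Ks = Pm (n*e) e - Jm n e Ks"
definition Qp :: "nat \<Rightarrow> nat \<Rightarrow> complex mat list \<Rightarrow> complex mat" where
  "Qp n e Ks = Wm n e Ks * dag (Wm n e Ks)"
definition Hm :: "nat \<Rightarrow> nat \<Rightarrow> complex mat list \<Rightarrow> complex mat" where
  "Hm n e Ks = complex_of_real (pi/2) \<cdot>\<^sub>m Qp n e Ks"
definition eta0 :: "nat \<Rightarrow> complex vec" where
  "eta0 e = vec e (\<lambda>i. if i = 0 then 1 else 0)"

lemma Wm_carrier[simp]: "Wm n e Ks \<in> carrier_mat (n*e) (n*e)" unfolding Wm_def by auto
lemma Qp_carrier[simp]: "Qp n e Ks \<in> carrier_mat (n*e) (n*e)"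
  unfolding Qp_def by (rule mult_carrier_mat[OF Wm_carrier dag_carrier[OF Wm_carrier]])
lemma Hm_carrier[simp]: "Hm n e Ks \<in> carrier_mat (n*e) (n*e)" unfolding Hm_def by auto

lemma Wm_dims[simp]: "dim_row (Wm n e Ks) = n*e" "dim_col (Wm n e Ks) = n*e" using carrier_matD[OF Wm_carrier[of n e Ks]] by simp_all
lemma Qp_dims[simp]: "dim_row (Qp n e Ks) = n*e" "dim_col (Qp n e Ks) = n*e" using carrier_matD[OF Qp_carrier[of n e Ks]] by simp_all
lemma Hm_dims[simp]: "dim_row (Hm n e Ks) = n*e" "dim_col (Hm n e Ks) = n*e" using carrier_matD[OF Hm_carrier[of n e Ks]] by simp_all

lemma dagW: "dag (Wm n e Ks) = Pm (n*e) e - dag (Jm n e Ks)"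
  unfolding Wm_def by (simp add: dag_minus[of _ "n*e" "n*e"] dagP)

lemma dWW:
  assumes e: "e = length Ks + 1" and Ks: "\<And>K. K \<in> set Ks \<Longrightarrow> K \<in> carrier_mat n n"
    and sum: "msum n n (map (\<lambda>K. dag K * K) Ks) = 1\<^sub>m n"
  shows "dag (Wm n e Ks) * Wm n e Ks = Pm (n*e) e + Pm (n*e) e"
proof -
  let ?P = "Pm (n*e) e" and ?J = "Jm n e Ks"
  have c: "?P \<in> carrier_mat (n*e) (n*e)" "?J \<in> carrier_mat (n*e) (n*e)" "dag ?J \<in> carrier_mat (n*e) (n*e)" by auto
  have "dag (Wm n e Ks) * Wm n e Ks = (?P - dag ?J) * (?P - ?J)" unfolding dagW by (simp only: Wm_def)
  also have "\<dots> = (?P - dag ?J) * ?P - (?P - dag ?J) * ?J"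
    by (rule mult_minus_distrib_mat) (use c in auto)
  also have "(?P - dag ?J) * ?P = ?P * ?P - dag ?J * ?P"
    by (rule minus_mult_distrib_mat) (use c in auto)
  also have "(?P - dag ?J) * ?J = ?P * ?J - dag ?J * ?J"
    by (rule minus_mult_distrib_mat) (use c in auto)
  also have "?P * ?P - dag ?J * ?P - (?P * ?J - dag ?J * ?J) = (?P - 0\<^sub>m (n*e) (n*e)) - (0\<^sub>m (n*e) (n*e) - ?P)"
    by (simp only: PP dJP PJ dJJ[OF e Ks sum])
  also have "\<dots> = ?P + ?P" by (rule eq_matI) auto
  finally show ?thesis .
qed

lemma WP: "Wm n e Ks * Pm (n*e) e = Wm n e Ks"
proof -
  have "Wm n e Ks * Pm (n*e) e = Pm (n*e) e * Pm (n*e) e - Jm n e Ks * Pm (n*e) e"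
    unfolding Wm_def by (rule minus_mult_distrib_mat) auto
  then show ?thesis by (simp add: PP JP Wm_def)
qed

lemma QQ:
  assumes e: "e = length Ks + 1" and Ks: "\<And>K. K \<in> set Ks \<Longrightarrow> K \<in> carrier_mat n n"
    and sum: "msum n n (map (\<lambda>K. dag K * K) Ks) = 1\<^sub>m n"
  shows "Qp n e Ks * Qp n e Ks = Qp n e Ks + Qp n e Ks"
proof -
  let ?W = "Wm n e Ks" and ?P = "Pm (n*e) e"
  have c: "?W \<in> carrier_mat (n*e) (n*e)" "dag ?W \<in> carrier_mat (n*e) (n*e)" "?P \<in> carrier_mat (n*e) (n*e)" by auto
  have a1: "?W * dag ?W * (?W * dag ?W) = ?W * (dag ?W * (?W * dag ?W))" by (rule assoc_mult_mat) (use c in auto)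
  have a2: "dag ?W * (?W * dag ?W) = (dag ?W * ?W) * dag ?W" by (rule assoc_mult_mat[symmetric]) (use c in auto)
  have "Qp n e Ks * Qp n e Ks = ?W * ((dag ?W * ?W) * dag ?W)"
    unfolding Qp_def a1 a2 ..
  also have "\<dots> = ?W * ((?P + ?P) * dag ?W)" by (simp only: dWW[OF e Ks sum])
  also have "\<dots> = (?W * (?P + ?P)) * dag ?W" by (rule assoc_mult_mat[symmetric]) (use c in auto)
  also have "?W * (?P + ?P) = ?W * ?P + ?W * ?P" by (rule mult_add_distrib_mat) (use c in auto)
  also have "\<dots> = ?W + ?W" by (simp only: WP)
  also have "(?W + ?W) * dag ?W = ?W * dag ?W + ?W * dag ?W" by (rule add_mult_distrib_mat) (use c in auto)
  finally show ?thesis unfolding Qp_def .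
qed

lemma dagQp: "dag (Qp n e Ks) = Qp n e Ks"
  unfolding Qp_def by (simp add: dag_mult[of _ "n*e" "n*e" _ "n*e"])

lemma dag_smult: "dag (c \<cdot>\<^sub>m A) = cnj c \<cdot>\<^sub>m dag A"
  by (rule eq_matI) auto

lemma Hm_herm: "hermitian (n*e) (Hm n e Ks)"
  unfolding hermitian_def Hm_def by (simp only: dag_smult dagQp complex_cnj_complex_of_real) simp

lemma pow_smult_idem:
  fixes Q :: "complex mat"
  assumes Q: "Q \<in> carrier_mat N N" and QQ: "Q * Q = Q"
  shows "(z \<cdot>\<^sub>m Q) ^\<^sub>m k = (if k = 0 then 1\<^sub>m N else z^k \<cdot>\<^sub>m Q)"
proof (induction k)
  case 0 then show ?case using Q by simp
next
  case (Suc k)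
  show ?case
  proof (cases "k = 0")
    case True then show ?thesis using Q Suc by simp
  next
    case False
    have "(z \<cdot>\<^sub>m Q) ^\<^sub>m Suc k = (z^k \<cdot>\<^sub>m Q) * (z \<cdot>\<^sub>m Q)" using Suc False by simp
    also have "\<dots> = z^k \<cdot>\<^sub>m (Q * (z \<cdot>\<^sub>m Q))" by (rule mult_smult_assoc_mat) (use Q in auto)
    also have "Q * (z \<cdot>\<^sub>m Q) = z \<cdot>\<^sub>m (Q * Q)" by (rule mult_smult_distrib) (use Q in auto)
    also have "z^k \<cdot>\<^sub>m (z \<cdot>\<^sub>m (Q * Q)) = z^(Suc k) \<cdot>\<^sub>m Q" unfolding QQ by (rule eq_matI) auto
    finally show ?thesis by simp
  qed
qed

lemma exp_sums_complex: "(\<lambda>k. z^k / of_nat (fact k)) sums exp (z::complex)"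
proof -
  have "(\<lambda>k. z^k /\<^sub>R fact k) sums exp z" by (rule exp_converges)
  moreover have "(\<lambda>k. z^k /\<^sub>R fact k) = (\<lambda>k. z^k / of_nat (fact k))"
    by (rule ext) (simp add: scaleR_conv_of_real divide_inverse mult.commute)
  ultimately show ?thesis by simp
qed

lemma mexp_idem:
  assumes Q: "Q \<in> carrier_mat N N" and QQ: "Q * Q = Q"
  shows "mexp (z \<cdot>\<^sub>m Q) = 1\<^sub>m N + (exp z - 1) \<cdot>\<^sub>m Q"
proof (rule eq_matI)
  fix i j assume "i < dim_row (1\<^sub>m N + (exp z - 1) \<cdot>\<^sub>m Q)" "j < dim_col (1\<^sub>m N + (exp z - 1) \<cdot>\<^sub>m Q)"
  then have ij: "i < N" "j < N" using Q by auto
  let ?d = "(if i = j then 1 else 0) :: complex" and ?q = "Q $$ (i,j)"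
  have tm: "((z \<cdot>\<^sub>m Q) ^\<^sub>m k) $$ (i,j) / of_nat (fact k) = ?q * (z^k / of_nat (fact k)) + (if k = 0 then ?d - ?q else 0)" for k
    using ij Q by (cases "k = 0") (auto simp: pow_smult_idem[OF Q QQ])
  have "(\<lambda>k. ?q * (z^k / of_nat (fact k)) + (if k = 0 then ?d - ?q else 0)) sums (?q * exp z + (?d - ?q))"
    by (intro sums_add sums_mult exp_sums_complex) (rule sums_single[where f="\<lambda>_. ?d - ?q" and i=0, simplified])
  then have "(\<Sum>k. ((z \<cdot>\<^sub>m Q) ^\<^sub>m k) $$ (i,j) / of_nat (fact k)) = ?q * exp z + (?d - ?q)"
    unfolding tm by (rule sums_unique[symmetric])
  then show "mexp (z \<cdot>\<^sub>m Q) $$ (i,j) = (1\<^sub>m N + (exp z - 1) \<cdot>\<^sub>m Q) $$ (i,j)"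
    using ij Q unfolding mexp_def by (simp add: algebra_simps)
qed (use Q in \<open>auto simp: mexp_def\<close>)

lemma eta0_dim[simp]: "dim_vec (eta0 e) = e" unfolding eta0_def by simp

lemma eta0_unit: assumes "0 < e" shows "unit_vec e (eta0 e)"
proof -
  have "(\<Sum>i<e. (cmod (eta0 e $ i))\<^sup>2) = (\<Sum>i<e. if i = 0 then 1 else 0)"
    by (intro sum.cong refl) (auto simp: eta0_def)
  also have "\<dots> = 1" using assms by simp
  finally show ?thesis unfolding unit_vec_def by (simp add: eta0_def)
qed

lemma ket_bra_eta0: "ket_bra (eta0 e) = mat e e (\<lambda>(i,j). if i = 0 \<and> j = 0 then 1 else 0)"
  unfolding ket_bra_def eta0_def by (rule eq_matI) auto

definition Xm :: "nat \<Rightarrow> nat \<Rightarrow> complex mat \<Rightarrow> complex mat" where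
  "Xm n e \<rho> = mat (n*e) (n*e) (\<lambda>(p,q). if p mod e = 0 \<and> q mod e = 0 then \<rho> $$ (p div e, q div e) else 0)"

lemma Xm_carrier[simp]: "Xm n e \<rho> \<in> carrier_mat (n*e) (n*e)" unfolding Xm_def by auto
lemma Xm_dims[simp]: "dim_row (Xm n e \<rho>) = n*e" "dim_col (Xm n e \<rho>) = n*e" unfolding Xm_def by auto
lemma Xm_index: "p < n*e \<Longrightarrow> q < n*e \<Longrightarrow> Xm n e \<rho> $$ (p,q) = (if p mod e = 0 \<and> q mod e = 0 then \<rho> $$ (p div e, q div e) else 0)"
  unfolding Xm_def by auto

lemma kron_eta0: assumes "\<rho> \<in> carrier_mat n n" "0 < e" shows "kron \<rho> (ket_bra (eta0 e)) = Xm n e \<rho>"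
  by (rule eq_matI) (use assms in \<open>auto simp: kron_def ket_bra_eta0 Xm_def div_lt\<close>)

lemma PX: "Pm (n*e) e * Xm n e \<rho> = Xm n e \<rho>"
  by (rule eq_matI) (auto simp del: mult_index_sum simp: Pm_left[of _ "n*e" "n*e"] Xm_index)

lemma XP: "Xm n e \<rho> * Pm (n*e) e = Xm n e \<rho>"
  by (rule eq_matI) (auto simp del: mult_index_sum simp: Pm_right[of _ "n*e"] Xm_index)

lemma dagX: "dag \<rho> = \<rho> \<Longrightarrow> \<rho> \<in> carrier_mat n n \<Longrightarrow> 0 < e \<Longrightarrow> dag (Xm n e \<rho>) = Xm n e \<rho>"
proof (rule eq_matI)
  fix p q assume h: "dag \<rho> = \<rho>" "\<rho> \<in> carrier_mat n n" "0 < e" and pq: "p < dim_row (Xm n e \<rho>)" "q < dim_col (Xm n e \<rho>)"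
  then have pq': "p < n*e" "q < n*e" by auto
  have "cnj (\<rho> $$ (q div e, p div e)) = \<rho> $$ (p div e, q div e)"
    using pq' h div_lt by (metis dag_index carrier_matD)
  then show "dag (Xm n e \<rho>) $$ (p,q) = Xm n e \<rho> $$ (p,q)" using pq' by (simp add: Xm_index)
qed auto

lemma dJX: "dag (Jm n e Ks) * Xm n e \<rho> = 0\<^sub>m (n*e) (n*e)"
proof -
  have "dag (Jm n e Ks) * Xm n e \<rho> = dag (Jm n e Ks) * (Pm (n*e) e * Xm n e \<rho>)" by (simp only: PX)
  also have "\<dots> = (dag (Jm n e Ks) * Pm (n*e) e) * Xm n e \<rho>" by (rule assoc_mult_mat[symmetric]) auto
  also have "\<dots> = 0\<^sub>m (n*e) (n*e)" by (simp add: dJP)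
  finally show ?thesis .
qed

lemma UX:
  assumes e: "e = length Ks + 1" and Ks: "\<And>K. K \<in> set Ks \<Longrightarrow> K \<in> carrier_mat n n"
    and sum: "msum n n (map (\<lambda>K. dag K * K) Ks) = 1\<^sub>m n"
  shows "(1\<^sub>m (n*e) - Qp n e Ks) * Xm n e \<rho> = Jm n e Ks * Xm n e \<rho>"
proof -
  let ?X = "Xm n e \<rho>" and ?W = "Wm n e Ks" and ?P = "Pm (n*e) e" and ?J = "Jm n e Ks"
  have "dag ?W * ?X = ?P * ?X - dag ?J * ?X" unfolding dagW by (rule minus_mult_distrib_mat) auto
  also have "\<dots> = ?X" by (rule eq_matI) (auto simp only: PX dJX, auto)
  finally have dWX: "dag ?W * ?X = ?X" .
  have "Qp n e Ks * ?X = ?W * (dag ?W * ?X)" unfolding Qp_def by (rule assoc_mult_mat) auto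
  also have "\<dots> = ?W * ?X" by (simp only: dWX)
  also have "\<dots> = ?P * ?X - ?J * ?X" unfolding Wm_def by (rule minus_mult_distrib_mat) auto
  also have "\<dots> = ?X - ?J * ?X" by (simp only: PX)
  finally have QX: "Qp n e Ks * ?X = ?X - ?J * ?X" .
  have "(1\<^sub>m (n*e) - Qp n e Ks) * ?X = 1\<^sub>m (n*e) * ?X - Qp n e Ks * ?X" by (rule minus_mult_distrib_mat) auto
  also have "\<dots> = ?X - (?X - ?J * ?X)" by (simp only: QX) simp
  also have "\<dots> = ?J * ?X" by (rule eq_matI) auto
  finally show ?thesis .
qed

lemma dagU: "dag (1\<^sub>m (n*e) - Qp n e Ks) = 1\<^sub>m (n*e) - Qp n e Ks"
  by (simp add: dag_minus[of _ "n*e" "n*e"] dagQp)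

lemma sandwichU:
  assumes e: "e = length Ks + 1" and Ks: "\<And>K. K \<in> set Ks \<Longrightarrow> K \<in> carrier_mat n n"
    and sum: "msum n n (map (\<lambda>K. dag K * K) Ks) = 1\<^sub>m n"
    and r: "\<rho> \<in> carrier_mat n n" "dag \<rho> = \<rho>"
  shows "(1\<^sub>m (n*e) - Qp n e Ks) * Xm n e \<rho> * dag (1\<^sub>m (n*e) - Qp n e Ks) = Jm n e Ks * (Xm n e \<rho> * dag (Jm n e Ks))"
proof -
  let ?X = "Xm n e \<rho>" and ?U = "1\<^sub>m (n*e) - Qp n e Ks" and ?J = "Jm n e Ks"
  have ep: "0 < e" using e by simp
  have cU: "?U \<in> carrier_mat (n*e) (n*e)" by auto
  have "?X * ?U = dag (dag (?X * ?U))" by simp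
  also have "dag (?X * ?U) = dag ?U * dag ?X" by (rule dag_mult) (use cU in auto)
  also have "\<dots> = ?U * ?X" by (simp only: dagU dagX[OF r(2,1) ep])
  also have "\<dots> = ?J * ?X" by (rule UX[OF e Ks sum])
  also have "dag (?J * ?X) = dag ?X * dag ?J" by (rule dag_mult) auto
  also have "\<dots> = ?X * dag ?J" by (simp only: dagX[OF r(2,1) ep])
  finally have XU: "?X * ?U = ?X * dag ?J" .
  have "?U * ?X * dag ?U = (?J * ?X) * ?U" by (simp only: dagU UX[OF e Ks sum])
  also have "\<dots> = ?J * (?X * ?U)" by (rule assoc_mult_mat) (use cU in auto)
  also have "\<dots> = ?J * (?X * dag ?J)" by (simp only: XU)
  finally show ?thesis .
qed

lemma LJ:
  assumes Y: "Y \<in> carrier_mat (n*e) (n*e)" and i: "i < n" and k: "k < e" and m: "m < n*e"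
  shows "(Jm n e Ks * Y) $$ (i*e+k, m) = (if k = 0 then 0 else (\<Sum>l1<n. (Ks ! (k-1)) $$ (i,l1) * Y $$ (l1*e, m)))"
proof -
  have ik: "i*e+k < n*e" using i k by (rule idx_less)
  have ep: "0 < e" using k by simp
  have "(Jm n e Ks * Y) $$ (i*e+k, m) = (\<Sum>l<n*e. Jm n e Ks $$ (i*e+k, l) * Y $$ (l, m))"
    using Y ik m by simp
  also have "\<dots> = (\<Sum>l1<n. \<Sum>k'<e. Jm n e Ks $$ (i*e+k, l1*e+k') * Y $$ (l1*e+k', m))" by (rule sum_mult_split)
  also have "\<dots> = (\<Sum>l1<n. \<Sum>k'<e. if k' = 0 then (if k = 0 then 0 else (Ks ! (k-1)) $$ (i,l1) * Y $$ (l1*e, m)) else 0)"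
    using k ik by (intro sum.cong refl) (auto simp: Jm_index idx_less)
  also have "\<dots> = (\<Sum>l1<n. if k = 0 then 0 else (Ks ! (k-1)) $$ (i,l1) * Y $$ (l1*e, m))"
    using ep by (simp add: sum.delta')
  also have "\<dots> = (if k = 0 then 0 else (\<Sum>l1<n. (Ks ! (k-1)) $$ (i,l1) * Y $$ (l1*e, m)))" by simp
  finally show ?thesis .
qed

lemma RJ:
  assumes Y: "Y \<in> carrier_mat (n*e) (n*e)" and j: "j < n" and k: "k < e" and l: "l < n*e"
  shows "(Y * dag (Jm n e Ks)) $$ (l, j*e+k) = (if k = 0 then 0 else (\<Sum>m1<n. Y $$ (l, m1*e) * cnj ((Ks ! (k-1)) $$ (j,m1))))"
proof -
  have jk: "j*e+k < n*e" using j k by (rule idx_less)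
  have ep: "0 < e" using k by simp
  have "(Y * dag (Jm n e Ks)) $$ (l, j*e+k) = (\<Sum>l'<n*e. Y $$ (l, l') * cnj (Jm n e Ks $$ (j*e+k, l')))"
    using Y jk l by simp
  also have "\<dots> = (\<Sum>m1<n. \<Sum>k'<e. Y $$ (l, m1*e+k') * cnj (Jm n e Ks $$ (j*e+k, m1*e+k')))" by (rule sum_mult_split)
  also have "\<dots> = (\<Sum>m1<n. \<Sum>k'<e. if k' = 0 then (if k = 0 then 0 else Y $$ (l, m1*e) * cnj ((Ks ! (k-1)) $$ (j,m1))) else 0)"
    using k jk by (intro sum.cong refl) (auto simp: Jm_index idx_less)
  also have "\<dots> = (\<Sum>m1<n. if k = 0 then 0 else Y $$ (l, m1*e) * cnj ((Ks ! (k-1)) $$ (j,m1)))"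
    using ep by (simp add: sum.delta')
  also have "\<dots> = (if k = 0 then 0 else (\<Sum>m1<n. Y $$ (l, m1*e) * cnj ((Ks ! (k-1)) $$ (j,m1))))" by simp
  finally show ?thesis .
qed

lemma sandwich_entry:
  assumes K: "K \<in> carrier_mat n n" and r: "\<rho> \<in> carrier_mat n n" and i: "i < n" and j: "j < n"
  shows "(K * \<rho> * dag K) $$ (i,j) = (\<Sum>l1<n. K $$ (i,l1) * (\<Sum>m1<n. \<rho> $$ (l1,m1) * cnj (K $$ (j,m1))))"
proof -
  have "(K * \<rho> * dag K) $$ (i,j) = (\<Sum>m1<n. (\<Sum>l1<n. K $$ (i,l1) * \<rho> $$ (l1,m1)) * cnj (K $$ (j,m1)))"
    using K r i j by simp
  also have "\<dots> = (\<Sum>m1<n. \<Sum>l1<n. K $$ (i,l1) * (\<rho> $$ (l1,m1) * cnj (K $$ (j,m1))))"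
    by (simp add: sum_distrib_right mult.assoc)
  also have "\<dots> = (\<Sum>l1<n. \<Sum>m1<n. K $$ (i,l1) * (\<rho> $$ (l1,m1) * cnj (K $$ (j,m1))))" by (rule sum.swap)
  also have "\<dots> = (\<Sum>l1<n. K $$ (i,l1) * (\<Sum>m1<n. \<rho> $$ (l1,m1) * cnj (K $$ (j,m1))))"
    by (simp add: sum_distrib_left)
  finally show ?thesis .
qed

lemma ptrace_JXJ:
  assumes e: "e = length Ks + 1" and Ks: "\<And>K. K \<in> set Ks \<Longrightarrow> K \<in> carrier_mat n n"
    and r: "\<rho> \<in> carrier_mat n n"
  shows "ptrace_E n e (Jm n e Ks * (Xm n e \<rho> * dag (Jm n e Ks))) = msum n n (map (\<lambda>K. K * \<rho> * dag K) Ks)"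
proof (rule eq_matI)
  let ?X = "Xm n e \<rho>" and ?J = "Jm n e Ks"
  have ep: "0 < e" using e by simp
  have em1: "e - 1 = length Ks" using e by simp
  have cY: "?X * dag ?J \<in> carrier_mat (n*e) (n*e)" by auto
  fix i j assume "i < dim_row (msum n n (map (\<lambda>K. K * \<rho> * dag K) Ks))" "j < dim_col (msum n n (map (\<lambda>K. K * \<rho> * dag K) Ks))"
  moreover have "msum n n (map (\<lambda>K. K * \<rho> * dag K) Ks) \<in> carrier_mat n n"
    by (rule msum_map_carrier) (use Ks r in auto)
  ultimately have ij: "i < n" "j < n" by auto
  define T where "T k = (\<Sum>l1<n. (Ks ! k) $$ (i,l1) * (\<Sum>m1<n. \<rho> $$ (l1,m1) * cnj ((Ks ! k) $$ (j,m1))))" for k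
  have inner: "(?J * (?X * dag ?J)) $$ (i*e+k, j*e+k) = (if k = 0 then 0 else T (k-1))" if k: "k < e" for k
  proof -
    have "(?J * (?X * dag ?J)) $$ (i*e+k, j*e+k) = (if k = 0 then 0 else (\<Sum>l1<n. (Ks ! (k-1)) $$ (i,l1) * (?X * dag ?J) $$ (l1*e, j*e+k)))"
      by (rule LJ[OF cY ij(1) k idx_less[OF ij(2) k]])
    also have "\<dots> = (if k = 0 then 0 else T (k-1))"
    proof (cases "k = 0")
      case False
      have "(?X * dag ?J) $$ (l1*e, j*e+k) = (\<Sum>m1<n. \<rho> $$ (l1,m1) * cnj ((Ks ! (k-1)) $$ (j,m1)))" if l1: "l1 < n" for l1
      proof -
        have l1e: "l1*e < n*e" using idx_less[OF l1 ep] by simp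
        have "(?X * dag ?J) $$ (l1*e, j*e+k) = (\<Sum>m1<n. ?X $$ (l1*e, m1*e) * cnj ((Ks ! (k-1)) $$ (j,m1)))"
          using RJ[OF Xm_carrier ij(2) k l1e] False by simp
        also have "\<dots> = (\<Sum>m1<n. \<rho> $$ (l1,m1) * cnj ((Ks ! (k-1)) $$ (j,m1)))"
          using ep l1e by (intro sum.cong refl) (auto simp: Xm_index idx_less[OF _ ep, of _ n, simplified])
        finally show ?thesis .
      qed
      then show ?thesis using False unfolding T_def by simp
    qed simp
    finally show ?thesis .
  qed
  have "ptrace_E n e (?J * (?X * dag ?J)) $$ (i,j) = (\<Sum>k<e. (?J * (?X * dag ?J)) $$ (i*e+k, j*e+k))"
    using ij unfolding ptrace_E_def by simp
  also have "\<dots> = (\<Sum>k<e. if k = 0 then 0 else T (k-1))" by (intro sum.cong refl) (simp add: inner)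
  also have "\<dots> = (\<Sum>k<length Ks. T k)" by (simp only: sum_lessThan_pos[OF ep] em1) simp
  also have "\<dots> = (\<Sum>K\<leftarrow>Ks. (K * \<rho> * dag K) $$ (i,j))"
    unfolding sum_list_map_nth T_def
  proof (intro sum.cong refl)
    fix k assume "k \<in> {..<length Ks}"
    then have "Ks ! k \<in> carrier_mat n n" using Ks by auto
    then show "(\<Sum>l1<n. (Ks ! k) $$ (i,l1) * (\<Sum>m1<n. \<rho> $$ (l1,m1) * cnj ((Ks ! k) $$ (j,m1)))) = (Ks ! k * \<rho> * dag (Ks ! k)) $$ (i,j)"
      using sandwich_entry[OF _ r ij] by simp
  qed
  also have "\<dots> = msum n n (map (\<lambda>K. K * \<rho> * dag K) Ks) $$ (i,j)"
    using Ks r ij by (intro msum_map_index[symmetric]) auto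
  finally show "ptrace_E n e (?J * (?X * dag ?J)) $$ (i,j) = msum n n (map (\<lambda>K. K * \<rho> * dag K) Ks) $$ (i,j)" .
next
  show "dim_row (ptrace_E n e (Jm n e Ks * (Xm n e \<rho> * dag (Jm n e Ks)))) = dim_row (msum n n (map (\<lambda>K. K * \<rho> * dag K) Ks))"
    using msum_map_carrier[of "map (\<lambda>K. K * \<rho> * dag K) Ks"]
    by (metis (no_types, lifting) carrier_matD(1) dim_row_mat(1) ptrace_E_def msum_map_carrier sandwich_sq Ks r)
next
  show "dim_col (ptrace_E n e (Jm n e Ks * (Xm n e \<rho> * dag (Jm n e Ks)))) = dim_col (msum n n (map (\<lambda>K. K * \<rho> * dag K) Ks))"
    by (metis (no_types, lifting) carrier_matD(2) dim_col_mat(1) ptrace_E_def msum_map_carrier sandwich_sq Ks r)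
qed

lemma Uexp:
  assumes e: "e = length Ks + 1" and Ks: "\<And>K. K \<in> set Ks \<Longrightarrow> K \<in> carrier_mat n n"
    and sum: "msum n n (map (\<lambda>K. dag K * K) Ks) = 1\<^sub>m n" and hb: "hbar \<noteq> 0"
  shows "mexp ((- \<i> * of_real hbar / of_real hbar) \<cdot>\<^sub>m Hm n e Ks) = 1\<^sub>m (n*e) - Qp n e Ks"
proof -
  let ?Q = "(1/2::complex) \<cdot>\<^sub>m Qp n e Ks" and ?N = "n*e"
  have cQ: "?Q \<in> carrier_mat ?N ?N" by simp
  have "?Q * ?Q = (1/2::complex) \<cdot>\<^sub>m (Qp n e Ks * ?Q)" by (rule mult_smult_assoc_mat) auto
  also have "Qp n e Ks * ?Q = (1/2::complex) \<cdot>\<^sub>m (Qp n e Ks * Qp n e Ks)" by (rule mult_smult_distrib) auto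
  also have "Qp n e Ks * Qp n e Ks = Qp n e Ks + Qp n e Ks" by (rule QQ[OF e Ks sum])
  also have "(1/2::complex) \<cdot>\<^sub>m ((1/2::complex) \<cdot>\<^sub>m (Qp n e Ks + Qp n e Ks)) = ?Q" by (rule eq_matI) auto
  finally have QQ': "?Q * ?Q = ?Q" .
  have c: "(- \<i> * of_real hbar / of_real hbar) = - \<i>" using hb by simp
  have "(- \<i> * of_real hbar / of_real hbar) \<cdot>\<^sub>m Hm n e Ks = (- \<i> * of_real pi) \<cdot>\<^sub>m ?Q"
    unfolding c Hm_def by (rule eq_matI) auto
  then have "mexp ((- \<i> * of_real hbar / of_real hbar) \<cdot>\<^sub>m Hm n e Ks) = 1\<^sub>m ?N + (exp (- \<i> * of_real pi) - 1) \<cdot>\<^sub>m ?Q"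
    using mexp_idem[OF cQ QQ'] by simp
  also have "exp (- \<i> * complex_of_real pi) = -1"
    by (simp add: exp_minus)
  also have "1\<^sub>m ?N + (-1 - 1) \<cdot>\<^sub>m ?Q = 1\<^sub>m ?N - Qp n e Ks" by (rule eq_matI) auto
  finally show ?thesis .
qed

lemma dilation:
  assumes K: "is_kraus_rep n n \<Phi> Ks" and e: "e = length Ks + 1" and hb: "hbar \<noteq> 0"
  shows "hamiltonian_dilation hbar n e (eta0 e) (Hm n e Ks) hbar \<Phi>"
proof -
  have Ks: "\<And>K. K \<in> set Ks \<Longrightarrow> K \<in> carrier_mat n n" and sum: "msum n n (map (\<lambda>K. dag K * K) Ks) = 1\<^sub>m n"
    and act: "\<And>\<rho>. density n \<rho> \<Longrightarrow> \<Phi> \<rho> = msum n n (map (\<lambda>K. K * \<rho> * dag K) Ks)"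
    using K unfolding is_kraus_rep_def by auto
  have ep: "0 < e" using e by simp
  have U: "mexp ((- \<i> * of_real hbar / of_real hbar) \<cdot>\<^sub>m Hm n e Ks) = 1\<^sub>m (n*e) - Qp n e Ks"
    by (rule Uexp) (rule e, rule Ks, assumption, rule sum, rule hb)
  show ?thesis unfolding hamiltonian_dilation_def Let_def U
  proof (intro allI impI)
    fix \<rho> assume d: "density n \<rho>"
    have r: "\<rho> \<in> carrier_mat n n" "dag \<rho> = \<rho>" using d unfolding density_def hermitian_def by auto
    have "ptrace_E n e ((1\<^sub>m (n*e) - Qp n e Ks) * kron \<rho> (ket_bra (eta0 e)) * dag (1\<^sub>m (n*e) - Qp n e Ks))
       = ptrace_E n e ((1\<^sub>m (n*e) - Qp n e Ks) * Xm n e \<rho> * dag (1\<^sub>m (n*e) - Qp n e Ks))"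
      by (simp only: kron_eta0[OF r(1) ep])
    also have "\<dots> = ptrace_E n e (Jm n e Ks * (Xm n e \<rho> * dag (Jm n e Ks)))"
      by (simp only: sandwichU[OF e Ks sum r(1) r(2)])
    also have "\<dots> = msum n n (map (\<lambda>K. K * \<rho> * dag K) Ks)" by (rule ptrace_JXJ[OF e Ks r(1)])
    finally show "\<Phi> \<rho> = ptrace_E n e ((1\<^sub>m (n*e) - Qp n e Ks) * kron \<rho> (ket_bra (eta0 e)) * dag (1\<^sub>m (n*e) - Qp n e Ks))"
      using act[OF d] by simp
  qed
qed

lemma sub_div: assumes "a*e \<le> (p::nat)" "0 < e" shows "(p - a*e) div e = p div e - a"
proof -
  obtain p' where p: "p = a*e + p'" using assms(1) le_Suc_ex by blast
  show ?thesis using assms(2) unfolding p by simp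
qed

lemma sub_mod: assumes "a*e \<le> (p::nat)" shows "(p - a*e) mod e = p mod e"
proof -
  obtain p' where p: "p = a*e + p'" using assms(1) le_Suc_ex by blast
  show ?thesis unfolding p by simp
qed

lemma lt_div: "0 < e \<Longrightarrow> ((p::nat) < a*e) = (p div e < a)"
  by (simp add: div_less_iff_less_mult)

lemma Jm_dsum:
  assumes len: "length As = length Bs" and e: "e = length As + 1"
    and As: "\<And>A. A \<in> set As \<Longrightarrow> A \<in> carrier_mat a a" and Bs: "\<And>B. B \<in> set Bs \<Longrightarrow> B \<in> carrier_mat b b"
  shows "Jm (a+b) e (map2 dsum As Bs) = dsum (Jm a e As) (Jm b e Bs)"
proof (rule eq_matI)
  have ep: "0 < e" using e by simp
  fix p q assume "p < dim_row (dsum (Jm a e As) (Jm b e Bs))" "q < dim_col (dsum (Jm a e As) (Jm b e Bs))"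
  then have pq: "p < a*e + b*e" "q < a*e + b*e" by auto
  then have pq': "p < (a+b)*e" "q < (a+b)*e" by (auto simp: distrib_right)
  have pdiv: "p div e < a+b" "q div e < a+b" using pq' div_lt by auto
  have RHS: "dsum (Jm a e As) (Jm b e Bs) $$ (p,q) = (if p < a*e then if q < a*e then Jm a e As $$ (p,q) else 0
     else if q < a*e then 0 else Jm b e Bs $$ (p - a*e, q - a*e))"
    by (rule dsum_index) (use pq in auto)
  show "Jm (a+b) e (map2 dsum As Bs) $$ (p,q) = dsum (Jm a e As) (Jm b e Bs) $$ (p,q)"
  proof (cases "q mod e = 0 \<and> p mod e \<noteq> 0")
    case False
    have "Jm (a+b) e (map2 dsum As Bs) $$ (p,q) = 0" using False pq' by (auto simp: Jm_index)
    moreover have "dsum (Jm a e As) (Jm b e Bs) $$ (p,q) = 0"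
    proof -
      have "Jm a e As $$ (p,q) = 0" if "p < a*e" "q < a*e" using False that by (auto simp: Jm_index)
      moreover have "Jm b e Bs $$ (p - a*e, q - a*e) = 0" if "\<not> p < a*e" "\<not> q < a*e"
      proof -
        have "p - a*e < b*e" "q - a*e < b*e" using pq that by auto
        then show ?thesis using False that by (auto simp: Jm_index sub_mod)
      qed
      ultimately show ?thesis unfolding RHS by auto
    qed
    ultimately show ?thesis by simp
  next
    case True
    define k where "k = p mod e - 1"
    have k: "k < length As" using True mod_less_divisor[OF ep, of p] e unfolding k_def by linarith
    have cA: "As ! k \<in> carrier_mat a a" using As k by auto
    have cB: "Bs ! k \<in> carrier_mat b b" using Bs k len by auto
    have "Jm (a+b) e (map2 dsum As Bs) $$ (p,q) = dsum (As ! k) (Bs ! k) $$ (p div e, q div e)"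
      using True pq' k len unfolding k_def by (simp add: Jm_index)
    also have "\<dots> = (if p div e < a then if q div e < a then (As ! k) $$ (p div e, q div e) else 0
       else if q div e < a then 0 else (Bs ! k) $$ (p div e - a, q div e - a))"
      by (rule dsum_index[OF cA cB pdiv])
    also have "\<dots> = dsum (Jm a e As) (Jm b e Bs) $$ (p,q)"
    proof -
      have 1: "(p < a*e) = (p div e < a)" "(q < a*e) = (q div e < a)" using ep by (simp_all add: lt_div)
      have 2: "Jm a e As $$ (p,q) = (As ! k) $$ (p div e, q div e)" if "p < a*e" "q < a*e"
        using that True unfolding k_def by (simp add: Jm_index)
      have 3: "Jm b e Bs $$ (p - a*e, q - a*e) = (Bs ! k) $$ (p div e - a, q div e - a)" if "\<not> p < a*e" "\<not> q < a*e"
      proof -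
        have "p - a*e < b*e" "q - a*e < b*e" using pq that by auto
        then show ?thesis using that True ep unfolding k_def by (simp add: Jm_index sub_mod sub_div)
      qed
      show ?thesis unfolding RHS 1 using 2 3 1 by auto
    qed
    finally show ?thesis .
  qed
qed (auto simp: distrib_right)

lemma Pm_dsum: assumes "0 < e" shows "Pm ((a+b)*e) e = dsum (Pm (a*e) e) (Pm (b*e) e)"
proof (rule eq_matI)
  fix p q assume "p < dim_row (dsum (Pm (a*e) e) (Pm (b*e) e))" "q < dim_col (dsum (Pm (a*e) e) (Pm (b*e) e))"
  then have pq: "p < a*e + b*e" "q < a*e + b*e" by auto
  then show "Pm ((a+b)*e) e $$ (p,q) = dsum (Pm (a*e) e) (Pm (b*e) e) $$ (p,q)"
    by (auto simp: Pm_index dsum_index[of _ "a*e" "a*e" _ "b*e" "b*e"] sub_mod distrib_right)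
qed (auto simp: distrib_right)

lemma Hm_dsum:
  assumes len: "length As = length Bs" and e: "e = length As + 1"
    and As: "\<And>A. A \<in> set As \<Longrightarrow> A \<in> carrier_mat a a" and Bs: "\<And>B. B \<in> set Bs \<Longrightarrow> B \<in> carrier_mat b b"
  shows "Hm (a+b) e (map2 dsum As Bs) = dsum (Hm a e As) (Hm b e Bs)"
proof -
  have ep: "0 < e" using e by simp
  have JD: "Jm (a+b) e (map2 dsum As Bs) = dsum (Jm a e As) (Jm b e Bs)"
    by (rule Jm_dsum) (rule len, rule e, rule As, assumption, rule Bs, assumption)
  have W: "Wm (a+b) e (map2 dsum As Bs) = dsum (Wm a e As) (Wm b e Bs)"
    unfolding Wm_def JD Pm_dsum[OF ep]
    by (rule dsum_minus) auto
  have "Qp (a+b) e (map2 dsum As Bs) = dsum (Qp a e As) (Qp b e Bs)"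
    unfolding Qp_def W dag_dsum by (rule dsum_mult) auto
  then show ?thesis unfolding Hm_def by (simp add: dsum_smult)
qed

lemma pow_dsum: assumes "X \<in> carrier_mat n1 n1" "Y \<in> carrier_mat n2 n2"
  shows "(dsum X Y) ^\<^sub>m k = dsum (X ^\<^sub>m k) (Y ^\<^sub>m k)"
proof (induction k)
  case 0 then show ?case using assms by (simp add: dsum_one)
next
  case (Suc k)
  then show ?case using assms by (simp add: dsum_mult[of _ n1 n1 _ n1 _ n2 n2 _ n2])
qed

lemma mexp_dsum: assumes X: "X \<in> carrier_mat n1 n1" and Y: "Y \<in> carrier_mat n2 n2"
  shows "mexp (dsum X Y) = dsum (mexp X) (mexp Y)"
proof (rule eq_matI)
  have cm: "mexp X \<in> carrier_mat n1 n1" "mexp Y \<in> carrier_mat n2 n2" using X Y unfolding mexp_def by auto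
  fix i j assume "i < dim_row (dsum (mexp X) (mexp Y))" "j < dim_col (dsum (mexp X) (mexp Y))"
  then have ij: "i < n1 + n2" "j < n1 + n2" using cm by auto
  have pc: "X ^\<^sub>m k \<in> carrier_mat n1 n1" "Y ^\<^sub>m k \<in> carrier_mat n2 n2" for k using X Y by auto
  show "mexp (dsum X Y) $$ (i,j) = dsum (mexp X) (mexp Y) $$ (i,j)"
    using ij X Y cm unfolding mexp_def
    by (simp add: pow_dsum[OF X Y] dsum_index[OF pc(1) pc(2)] dsum_index[of _ n1 n1 _ n2 n2])
qed (use X Y in \<open>auto simp: mexp_def\<close>)

lemma kron_dsumA: assumes r: "\<rho> \<in> carrier_mat a a" and E: "E \<in> carrier_mat e e" and ep: "0 < e"
  shows "kron (dsum \<rho> (0\<^sub>m b b)) E = dsum (kron \<rho> E) (0\<^sub>m (b*e) (b*e))"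
proof (rule eq_matI)
  have ck: "kron \<rho> E \<in> carrier_mat (a*e) (a*e)" using r E unfolding kron_def by auto
  fix p q assume "p < dim_row (dsum (kron \<rho> E) (0\<^sub>m (b*e) (b*e)))" "q < dim_col (dsum (kron \<rho> E) (0\<^sub>m (b*e) (b*e)))"
  then have pq: "p < a*e + b*e" "q < a*e + b*e" using ck by auto
  then have pq': "p < (a+b)*e" "q < (a+b)*e" by (auto simp: distrib_right)
  have pdiv: "p div e < a+b" "q div e < a+b" using pq' div_lt by auto
  have cd: "dsum \<rho> (0\<^sub>m b b) \<in> carrier_mat (a+b) (a+b)" using r by auto
  have L: "kron (dsum \<rho> (0\<^sub>m b b)) E $$ (p,q) = dsum \<rho> (0\<^sub>m b b) $$ (p div e, q div e) * E $$ (p mod e, q mod e)"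
    using pq' cd E r unfolding kron_def by auto
  have R: "dsum (kron \<rho> E) (0\<^sub>m (b*e) (b*e)) $$ (p,q) = (if p < a*e then if q < a*e then kron \<rho> E $$ (p,q) else 0
     else if q < a*e then 0 else 0\<^sub>m (b*e) (b*e) $$ (p - a*e, q - a*e))"
    by (rule dsum_index[OF ck]) (use pq in auto)
  have 1: "(p < a*e) = (p div e < a)" "(q < a*e) = (q div e < a)" using ep by (simp_all add: lt_div)
  have 2: "kron \<rho> E $$ (p,q) = \<rho> $$ (p div e, q div e) * E $$ (p mod e, q mod e)" if "p < a*e" "q < a*e"
    using that r E unfolding kron_def by auto
  have 3: "0\<^sub>m (b*e) (b*e) $$ (p - a*e, q - a*e) = 0" if "\<not> p < a*e" "\<not> q < a*e"
    using that pq by simp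
  show "kron (dsum \<rho> (0\<^sub>m b b)) E $$ (p,q) = dsum (kron \<rho> E) (0\<^sub>m (b*e) (b*e)) $$ (p,q)"
    unfolding L R using 1 2 3 pdiv r by (auto simp: dsum_index[OF r zero_carrier_mat])
qed (use r E in \<open>auto simp: kron_def distrib_right\<close>)

lemma kron_dsumB: assumes r: "\<rho> \<in> carrier_mat b b" and E: "E \<in> carrier_mat e e" and ep: "0 < e"
  shows "kron (dsum (0\<^sub>m a a) \<rho>) E = dsum (0\<^sub>m (a*e) (a*e)) (kron \<rho> E)"
proof (rule eq_matI)
  have ck: "kron \<rho> E \<in> carrier_mat (b*e) (b*e)" using r E unfolding kron_def by auto
  fix p q assume "p < dim_row (dsum (0\<^sub>m (a*e) (a*e)) (kron \<rho> E))" "q < dim_col (dsum (0\<^sub>m (a*e) (a*e)) (kron \<rho> E))"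
  then have pq: "p < a*e + b*e" "q < a*e + b*e" using ck by auto
  then have pq': "p < (a+b)*e" "q < (a+b)*e" by (auto simp: distrib_right)
  have pdiv: "p div e < a+b" "q div e < a+b" using pq' div_lt by auto
  have cd: "dsum (0\<^sub>m a a) \<rho> \<in> carrier_mat (a+b) (a+b)" using r by auto
  have L: "kron (dsum (0\<^sub>m a a) \<rho>) E $$ (p,q) = dsum (0\<^sub>m a a) \<rho> $$ (p div e, q div e) * E $$ (p mod e, q mod e)"
    using pq' cd E r unfolding kron_def by auto
  have R: "dsum (0\<^sub>m (a*e) (a*e)) (kron \<rho> E) $$ (p,q) = (if p < a*e then if q < a*e then 0\<^sub>m (a*e) (a*e) $$ (p,q) else 0
     else if q < a*e then 0 else kron \<rho> E $$ (p - a*e, q - a*e))"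
    by (rule dsum_index[OF _ ck]) (use pq in auto)
  have 1: "(p < a*e) = (p div e < a)" "(q < a*e) = (q div e < a)" using ep by (simp_all add: lt_div)
  have 2: "0\<^sub>m (a*e) (a*e) $$ (p,q) = 0" if "p < a*e" "q < a*e" using that by simp
  have 3: "kron \<rho> E $$ (p - a*e, q - a*e) = \<rho> $$ (p div e - a, q div e - a) * E $$ (p mod e, q mod e)"
    if "\<not> p < a*e" "\<not> q < a*e"
  proof -
    have "p - a*e < b*e" "q - a*e < b*e" using that pq by auto
    then show ?thesis using that r E ep unfolding kron_def by (auto simp: sub_div sub_mod)
  qed
  show "kron (dsum (0\<^sub>m a a) \<rho>) E $$ (p,q) = dsum (0\<^sub>m (a*e) (a*e)) (kron \<rho> E) $$ (p,q)"
    unfolding L R using 1 2 3 pdiv r by (auto simp: dsum_index[OF zero_carrier_mat r])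
qed (use r E in \<open>auto simp: kron_def distrib_right\<close>)

lemma ptrace_dsumA: assumes M: "M \<in> carrier_mat (a*e) (a*e)"
  shows "ptrace_E (a+b) e (dsum M (0\<^sub>m (b*e) (b*e))) = dsum (ptrace_E a e M) (0\<^sub>m b b)"
proof (rule eq_matI)
  fix i j assume "i < dim_row (dsum (ptrace_E a e M) (0\<^sub>m b b))" "j < dim_col (dsum (ptrace_E a e M) (0\<^sub>m b b))"
  then have ij: "i < a+b" "j < a+b" by (auto simp: ptrace_E_def)
  have r: "(i*e+k < a*e) = (i < a)" if "k < e" for i k
    using that by (simp add: lt_div)
  have l: "i*e+k < a*e+b*e" if "i < a+b" "k < e" for i k using idx_less[OF that] by (simp add: distrib_right)
  have l2: "i*e+k - a*e < b*e" if "a \<le> i" "i < a+b" "k < e" for i k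
    using l[OF that(2,3)] mult_le_mono1[OF that(1), of e] by linarith
  show "ptrace_E (a+b) e (dsum M (0\<^sub>m (b*e) (b*e))) $$ (i,j) = dsum (ptrace_E a e M) (0\<^sub>m b b) $$ (i,j)"
    using ij M by (auto simp: ptrace_E_def dsum_index[of _ "a*e" "a*e" _ "b*e" "b*e"] dsum_index[of _ a a _ b b] r l l2 intro!: sum.neutral sum.cong)
qed (auto simp: ptrace_E_def)

lemma ptrace_dsumB: assumes M: "M \<in> carrier_mat (b*e) (b*e)"
  shows "ptrace_E (a+b) e (dsum (0\<^sub>m (a*e) (a*e)) M) = dsum (0\<^sub>m a a) (ptrace_E b e M)"
proof (rule eq_matI)
  fix i j assume "i < dim_row (dsum (0\<^sub>m a a) (ptrace_E b e M))" "j < dim_col (dsum (0\<^sub>m a a) (ptrace_E b e M))"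
  then have ij: "i < a+b" "j < a+b" by (auto simp: ptrace_E_def)
  have r: "(i*e+k < a*e) = (i < a)" if "k < e" for i k
    using that by (simp add: lt_div)
  have l: "i*e+k < a*e+b*e" if "i < a+b" "k < e" for i k using idx_less[OF that] by (simp add: distrib_right)
  have s: "i*e+k - a*e = (i-a)*e+k" if "a \<le> i" for i k using that by (simp add: diff_mult_distrib)
  show "ptrace_E (a+b) e (dsum (0\<^sub>m (a*e) (a*e)) M) $$ (i,j) = dsum (0\<^sub>m a a) (ptrace_E b e M) $$ (i,j)"
    using ij M by (auto simp: ptrace_E_def dsum_index[of _ "a*e" "a*e" _ "b*e" "b*e"] dsum_index[of _ a a _ b b] r l s intro!: sum.neutral sum.cong)
qed (auto simp: ptrace_E_def)

lemma mexp_carrier: "M \<in> carrier_mat N N \<Longrightarrow> mexp M \<in> carrier_mat N N"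
  unfolding mexp_def by auto

lemma dil_BP:
  assumes ep: "0 < e" and uv: "unit_vec e eta"
    and HA: "hermitian (a*e) HAE" and HB: "hermitian (b*e) HBE"
    and DA: "hamiltonian_dilation hbar a e eta HAE T CA"
    and DB: "hamiltonian_dilation hbar b e eta HBE T CB"
    and DS: "hamiltonian_dilation hbar (a+b) e eta (dsum HAE HBE) T CS"
  shows "BP a b CS CA CB"
proof -
  define c where "c = (- \<i> * of_real T / of_real hbar :: complex)"
  have cHA: "HAE \<in> carrier_mat (a*e) (a*e)" using HA unfolding hermitian_def by auto
  have cHB: "HBE \<in> carrier_mat (b*e) (b*e)" using HB unfolding hermitian_def by auto
  define UA where "UA = mexp (c \<cdot>\<^sub>m HAE)"
  define UB where "UB = mexp (c \<cdot>\<^sub>m HBE)"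
  have cUA: "UA \<in> carrier_mat (a*e) (a*e)" unfolding UA_def using cHA by (intro mexp_carrier) auto
  have cUB: "UB \<in> carrier_mat (b*e) (b*e)" unfolding UB_def using cHB by (intro mexp_carrier) auto
  have US: "mexp (c \<cdot>\<^sub>m dsum HAE HBE) = dsum UA UB"
    unfolding dsum_smult UA_def UB_def by (rule mexp_dsum) (use cHA cHB in auto)
  have cE: "ket_bra eta \<in> carrier_mat e e" using uv unfolding unit_vec_def ket_bra_def by auto
  have dA: "\<And>\<rho>. density a \<rho> \<Longrightarrow> CA \<rho> = ptrace_E a e (UA * kron \<rho> (ket_bra eta) * dag UA)"
    using DA unfolding hamiltonian_dilation_def Let_def UA_def c_def by blast
  have dB: "\<And>\<rho>. density b \<rho> \<Longrightarrow> CB \<rho> = ptrace_E b e (UB * kron \<rho> (ket_bra eta) * dag UB)"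
    using DB unfolding hamiltonian_dilation_def Let_def UB_def c_def by blast
  have dS: "\<And>\<rho>. density (a+b) \<rho> \<Longrightarrow> CS \<rho> = ptrace_E (a+b) e (dsum UA UB * kron \<rho> (ket_bra eta) * dag (dsum UA UB))"
    using DS unfolding hamiltonian_dilation_def Let_def US[unfolded c_def] by blast
  show ?thesis unfolding BP_def
  proof (intro conjI allI impI)
    fix \<rho> assume d: "density a \<rho>"
    have r: "\<rho> \<in> carrier_mat a a" using d by (rule density_carrier)
    have ck: "kron \<rho> (ket_bra eta) \<in> carrier_mat (a*e) (a*e)" using r cE unfolding kron_def by auto
    have "CS (dsum \<rho> (0\<^sub>m b b)) = ptrace_E (a+b) e (dsum UA UB * dsum (kron \<rho> (ket_bra eta)) (0\<^sub>m (b*e) (b*e)) * dag (dsum UA UB))"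
      using dS[OF density_dsumA[OF d]] kron_dsumA[OF r cE ep] by simp
    also have "dsum UA UB * dsum (kron \<rho> (ket_bra eta)) (0\<^sub>m (b*e) (b*e)) * dag (dsum UA UB)
        = dsum (UA * kron \<rho> (ket_bra eta) * dag UA) (UB * 0\<^sub>m (b*e) (b*e) * dag UB)"
      by (rule sandwich_dsum[OF cUA cUB ck]) simp
    also have "UB * 0\<^sub>m (b*e) (b*e) * dag UB = 0\<^sub>m (b*e) (b*e)" using cUB by simp
    also have "ptrace_E (a+b) e (dsum (UA * kron \<rho> (ket_bra eta) * dag UA) (0\<^sub>m (b*e) (b*e)))
        = dsum (ptrace_E a e (UA * kron \<rho> (ket_bra eta) * dag UA)) (0\<^sub>m b b)"
      by (rule ptrace_dsumA) (use cUA ck in auto)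
    also have "ptrace_E a e (UA * kron \<rho> (ket_bra eta) * dag UA) = CA \<rho>" using dA[OF d] by simp
    finally show "CS (dsum \<rho> (0\<^sub>m b b)) = dsum (CA \<rho>) (0\<^sub>m b b)" .
  next
    fix \<rho> assume d: "density b \<rho>"
    have r: "\<rho> \<in> carrier_mat b b" using d by (rule density_carrier)
    have ck: "kron \<rho> (ket_bra eta) \<in> carrier_mat (b*e) (b*e)" using r cE unfolding kron_def by auto
    have "CS (dsum (0\<^sub>m a a) \<rho>) = ptrace_E (a+b) e (dsum UA UB * dsum (0\<^sub>m (a*e) (a*e)) (kron \<rho> (ket_bra eta)) * dag (dsum UA UB))"
      using dS[OF density_dsumB[OF d]] kron_dsumB[OF r cE ep] by simp
    also have "dsum UA UB * dsum (0\<^sub>m (a*e) (a*e)) (kron \<rho> (ket_bra eta)) * dag (dsum UA UB)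
        = dsum (UA * 0\<^sub>m (a*e) (a*e) * dag UA) (UB * kron \<rho> (ket_bra eta) * dag UB)"
      by (rule sandwich_dsum[OF cUA cUB _ ck]) simp
    also have "UA * 0\<^sub>m (a*e) (a*e) * dag UA = 0\<^sub>m (a*e) (a*e)" using cUA by simp
    also have "ptrace_E (a+b) e (dsum (0\<^sub>m (a*e) (a*e)) (UB * kron \<rho> (ket_bra eta) * dag UB))
        = dsum (0\<^sub>m a a) (ptrace_E b e (UB * kron \<rho> (ket_bra eta) * dag UB))"
      by (rule ptrace_dsumB) (use cUB ck in auto)
    also have "ptrace_E b e (UB * kron \<rho> (ket_bra eta) * dag UB) = CB \<rho>" using dB[OF d] by simp
    finally show "CS (dsum (0\<^sub>m a a) \<rho>) = dsum (0\<^sub>m a a) (CB \<rho>)" .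
  qed
qed

theorem theorem1:
  fixes a b :: nat and hbar :: real
    and CA CB CS :: "complex mat \<Rightarrow> complex mat"
  assumes "a > 0" and "b > 0" and "hbar > 0"
    and "is_channel a a CA" and "is_channel b b CB" and "is_channel (a+b) (a+b) CS"
  shows "(superposition_of a b CS CA CB
           \<longleftrightarrow> (\<exists>As Bs. length As = length Bs \<and>
                  is_kraus_rep a a CA As \<and> is_kraus_rep b b CB Bs \<and>
                  is_kraus_rep (a+b) (a+b) CS (map2 dsum As Bs)))
       \<and> (superposition_of a b CS CA CB
           \<longleftrightarrow> (\<exists>e eta HAE HBE T. e > 0 \<and> unit_vec e eta \<and>
                  hermitian (a*e) HAE \<and> hermitian (b*e) HBE \<and>
                  hamiltonian_dilation hbar a e eta HAE T CA \<and>
                  hamiltonian_dilation hbar b e eta HBE T CB \<and>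
                  hamiltonian_dilation hbar (a+b) e eta (dsum HAE HBE) T CS))"
proof -
  obtain As0 where KA0: "is_kraus_rep a a CA As0" using assms(4) unfolding is_channel_def by auto
  obtain Bs0 where KB0: "is_kraus_rep b b CB Bs0" using assms(5) unfolding is_channel_def by auto
  obtain Ks0 where KS0: "is_kraus_rep (a+b) (a+b) CS Ks0" using assms(6) unfolding is_channel_def by auto
  have hb: "hbar \<noteq> 0" using assms(3) by simp
  have eq12: "superposition_of a b CS CA CB
           \<longleftrightarrow> (\<exists>As Bs. length As = length Bs \<and>
                  is_kraus_rep a a CA As \<and> is_kraus_rep b b CB Bs \<and>
                  is_kraus_rep (a+b) (a+b) CS (map2 dsum As Bs))"
    using one_to_two[OF _ assms(6)] two_to_one by blast
  have eq13: "superposition_of a b CS CA CB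
           \<longleftrightarrow> (\<exists>e eta HAE HBE T. e > 0 \<and> unit_vec e eta \<and>
                  hermitian (a*e) HAE \<and> hermitian (b*e) HBE \<and>
                  hamiltonian_dilation hbar a e eta HAE T CA \<and>
                  hamiltonian_dilation hbar b e eta HBE T CB \<and>
                  hamiltonian_dilation hbar (a+b) e eta (dsum HAE HBE) T CS)"
  proof
    assume S: "superposition_of a b CS CA CB"
    obtain As Bs where len: "length As = length Bs" and KA: "is_kraus_rep a a CA As"
      and KB: "is_kraus_rep b b CB Bs" and KS: "is_kraus_rep (a+b) (a+b) CS (map2 dsum As Bs)"
      using one_to_two[OF S assms(6)] by blast
    define e where "e = length As + 1"
    have ep: "0 < e" unfolding e_def by simp
    have eB: "e = length Bs + 1" using len unfolding e_def by simp
    have eS: "e = length (map2 dsum As Bs) + 1" using len unfolding e_def by simp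
    have As: "\<And>A. A \<in> set As \<Longrightarrow> A \<in> carrier_mat a a" using KA unfolding is_kraus_rep_def by auto
    have Bs: "\<And>B. B \<in> set Bs \<Longrightarrow> B \<in> carrier_mat b b" using KB unfolding is_kraus_rep_def by auto
    have HD: "Hm (a+b) e (map2 dsum As Bs) = dsum (Hm a e As) (Hm b e Bs)"
      by (rule Hm_dsum) (rule len, rule e_def, rule As, assumption, rule Bs, assumption)
    have "hamiltonian_dilation hbar a e (eta0 e) (Hm a e As) hbar CA"
      by (rule dilation[OF KA e_def hb])
    moreover have "hamiltonian_dilation hbar b e (eta0 e) (Hm b e Bs) hbar CB"
      by (rule dilation[OF KB eB hb])
    moreover have "hamiltonian_dilation hbar (a+b) e (eta0 e) (dsum (Hm a e As) (Hm b e Bs)) hbar CS"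
      using dilation[OF KS eS hb] unfolding HD .
    moreover have "unit_vec e (eta0 e)" using ep by (rule eta0_unit)
    moreover have "hermitian (a*e) (Hm a e As)" "hermitian (b*e) (Hm b e Bs)" by (rule Hm_herm)+
    ultimately show "\<exists>e eta HAE HBE T. e > 0 \<and> unit_vec e eta \<and>
                  hermitian (a*e) HAE \<and> hermitian (b*e) HBE \<and>
                  hamiltonian_dilation hbar a e eta HAE T CA \<and>
                  hamiltonian_dilation hbar b e eta HBE T CB \<and>
                  hamiltonian_dilation hbar (a+b) e eta (dsum HAE HBE) T CS"
      using ep by blast
  next
    assume "\<exists>e eta HAE HBE T. e > 0 \<and> unit_vec e eta \<and>
                  hermitian (a*e) HAE \<and> hermitian (b*e) HBE \<and>
                  hamiltonian_dilation hbar a e eta HAE T CA \<and>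
                  hamiltonian_dilation hbar b e eta HBE T CB \<and>
                  hamiltonian_dilation hbar (a+b) e eta (dsum HAE HBE) T CS"
    then obtain e eta HAE HBE T where "e > 0" "unit_vec e eta" "hermitian (a*e) HAE" "hermitian (b*e) HBE"
        "hamiltonian_dilation hbar a e eta HAE T CA" "hamiltonian_dilation hbar b e eta HBE T CB"
        "hamiltonian_dilation hbar (a+b) e eta (dsum HAE HBE) T CS" by blast
    then have BP: "BP a b CS CA CB" by (rule dil_BP)
    have R: "is_kraus_rep a a CA (map (blockA a) Ks0) \<and> is_kraus_rep b b CB (map (blockB a b) Ks0)
       \<and> Ks0 = map2 dsum (map (blockA a) Ks0) (map (blockB a b) Ks0)"
      by (rule BP_kraus[OF BP KA0 KB0 KS0])
    have KS': "is_kraus_rep (a+b) (a+b) CS (map2 dsum (map (blockA a) Ks0) (map (blockB a b) Ks0))"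
      using KS0 R by simp
    show "superposition_of a b CS CA CB"
      by (rule two_to_one[OF _ _ _ KS']) (use R in auto)
  qed
  show ?thesis using eq12 eq13 by blast
qed

end
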